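(* Over all \textsc{Snort} positions (finite simple graphs $G$), the difference $t(G)-\deg(G)$ is unbounded; that is, for every real $M$ there is a finite simple graph $G$ such that \textsc{Snort} played on $G$ satisfies $t(G)-\deg(G)>M$.
   Context: \textsc{Snort} is a two-player normal-play combinatorial game (the player unable to move loses) between Left (blue) and Right (red), played on a finite simple graph; players alternately colour an uncoloured vertex in their own colour, and a player may not colour a vertex adjacent to a vertex coloured by the opponent. $t(G)$ denotes the temperature (in the standard sense of combinatorial game theory, via thermographs) of the game \textsc{Snort} played on the uncoloured graph $G$, and $\deg(G)$ denotes the maximum degree of a vertex of $G$. *)

theory Defs
  imports Complex_Main
begin

datatype pgame = Game "pgame list" "pgame list"

lemma size_opt_L [termination_simp]: "g \<in> set GL \<Longrightarrow> size g < size (Game GL GR)"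
  by (induct GL) auto
lemma size_opt_R [termination_simp]: "g \<in> set GR \<Longrightarrow> size g < size (Game GL GR)"
  by (induct GR) auto

function game_ge :: "pgame \<Rightarrow> pgame \<Rightarrow> bool" where
  "game_ge (Game GL GR) (Game HL HR) \<longleftrightarrow>
     (\<forall>gr\<in>set GR. \<not> game_ge (Game HL HR) gr) \<and> (\<forall>hl\<in>set HL. \<not> game_ge hl (Game GL GR))"
  by pat_completeness auto
termination
  by (relation "measure (\<lambda>(g, h). size g + size h)") (auto dest: size_opt_L size_opt_R)

definition game_eq :: "pgame \<Rightarrow> pgame \<Rightarrow> bool" where
  "game_eq G H \<longleftrightarrow> game_ge G H \<and> game_ge H G"

fun pos_int_game :: "nat \<Rightarrow> pgame" where
  "pos_int_game 0 = Game [] []"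
| "pos_int_game (Suc n) = Game [pos_int_game n] []"

fun neg_int_game :: "nat \<Rightarrow> pgame" where
  "neg_int_game 0 = Game [] []"
| "neg_int_game (Suc n) = Game [] [neg_int_game n]"

definition int_game :: "int \<Rightarrow> pgame" where
  "int_game m = (if m \<ge> 0 then pos_int_game (nat m) else neg_int_game (nat (- m)))"

text \<open>num_game k m is the canonical form of the dyadic rational m / 2^k.\<close>
fun num_game :: "nat \<Rightarrow> int \<Rightarrow> pgame" where
  "num_game 0 m = int_game m"
| "num_game (Suc k) m =
     (if even m then num_game k (m div 2)
      else Game [num_game k ((m - 1) div 2)] [num_game k ((m + 1) div 2)])"

definition is_number :: "pgame \<Rightarrow> bool" where
  "is_number G \<longleftrightarrow> (\<exists>k m. game_eq G (num_game k m))"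

definition number_value :: "pgame \<Rightarrow> real" where
  "number_value G = (THE x. \<exists>k m. x = real_of_int m / 2 ^ k \<and> game_eq G (num_game k m))"

type_synonym walls = "(real \<Rightarrow> real) \<times> (real \<Rightarrow> real)"  \<comment> \<open>(left wall, right wall)\<close>

definition scaffold_L :: "walls list \<Rightarrow> real \<Rightarrow> real" where
  "scaffold_L ws t = Max ((\<lambda>w. snd w t - t) ` set ws)"

definition scaffold_R :: "walls list \<Rightarrow> real \<Rightarrow> real" where
  "scaffold_R ws t = Min ((\<lambda>w. fst w t + t) ` set ws)"

definition crit_temp :: "walls list \<Rightarrow> walls list \<Rightarrow> real" where
  "crit_temp wl wr = Inf {t. -1 \<le> t \<and> scaffold_L wl t \<le> scaffold_R wr t}"

function thermo_walls :: "pgame \<Rightarrow> walls" where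
  "thermo_walls (Game GL GR) =
     (if is_number (Game GL GR)
      then (\<lambda>_. number_value (Game GL GR), \<lambda>_. number_value (Game GL GR))
      else (let wl = map thermo_walls GL; wr = map thermo_walls GR;
                ts = crit_temp wl wr; x = scaffold_L wl ts
            in (\<lambda>t. if t \<le> ts then scaffold_L wl t else x,
                \<lambda>t. if t \<le> ts then scaffold_R wr t else x)))"
  by pat_completeness auto
termination
  by (relation "measure size") (auto dest: size_opt_L size_opt_R)

fun temperature :: "pgame \<Rightarrow> real" where
  "temperature (Game GL GR) =
     (if is_number (Game GL GR)
      then - 1 / 2 ^ (LEAST k. \<exists>m. game_eq (Game GL GR) (num_game k m))
      else crit_temp (map thermo_walls GL) (map thermo_walls GR))"

definition simple_graph :: "nat set \<Rightarrow> (nat \<Rightarrow> nat \<Rightarrow> bool) \<Rightarrow> bool" where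
  "simple_graph V E \<longleftrightarrow> finite V \<and> (\<forall>u v. E u v \<longrightarrow> u \<in> V \<and> v \<in> V)
     \<and> (\<forall>u v. E u v \<longrightarrow> E v u) \<and> (\<forall>v. \<not> E v v)"

definition max_degree :: "nat set \<Rightarrow> (nat \<Rightarrow> nat \<Rightarrow> bool) \<Rightarrow> nat" where
  "max_degree V E = (if V = {} then 0 else Max ((\<lambda>v. card {u \<in> V. E v u}) ` V))"

text \<open>Snort position with blue (Left) set B and red (Right) set R; fuel n bounds the
  number of remaining moves (n = card V suffices from the empty colouring).\<close>
fun snort_pos :: "nat \<Rightarrow> nat set \<Rightarrow> (nat \<Rightarrow> nat \<Rightarrow> bool) \<Rightarrow> nat set \<Rightarrow> nat set \<Rightarrow> pgame" where
  "snort_pos 0 V E B R = Game [] []"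
| "snort_pos (Suc n) V E B R =
     Game (map (\<lambda>v. snort_pos n V E (insert v B) R)
             (sorted_list_of_set {v \<in> V - B - R. \<forall>u\<in>R. \<not> E u v}))
          (map (\<lambda>v. snort_pos n V E B (insert v R))
             (sorted_list_of_set {v \<in> V - B - R. \<forall>u\<in>B. \<not> E u v}))"

definition snort :: "nat set \<Rightarrow> (nat \<Rightarrow> nat \<Rightarrow> bool) \<Rightarrow> pgame" where
  "snort V E = snort_pos (card V) V E {} {}"

end

theory Submission
  imports Defs
begin

fun lo :: "pgame \<Rightarrow> pgame list" where "lo (Game l r) = l"
fun ro :: "pgame \<Rightarrow> pgame list" where "ro (Game l r) = r"

lemma ge_def2: "game_ge G H \<longleftrightarrow> (\<forall>gr\<in>set (ro G). \<not> game_ge H gr) \<and> (\<forall>hl\<in>set (lo H). \<not> game_ge hl G)"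
  by (cases G; cases H) auto

lemma size_lo: "g \<in> set (lo G) \<Longrightarrow> size g < size G"
  by (cases G) (auto dest: size_opt_L)
lemma size_ro: "g \<in> set (ro G) \<Longrightarrow> size g < size G"
  by (cases G) (auto dest: size_opt_R)

lemma ge_refl: "game_ge G G"
proof (induction G rule: measure_induct_rule[of size])
  case (less G)
  show ?case
  proof (subst ge_def2, intro conjI ballI notI)
    fix gr assume gr: "gr \<in> set (ro G)" and h: "game_ge G gr"
    from h have "\<not> game_ge gr gr" using gr by (subst (asm) ge_def2) auto
    with less size_ro[OF gr] show False by auto
  next
    fix gl assume gl: "gl \<in> set (lo G)" and h: "game_ge gl G"
    from h have "\<not> game_ge gl gl" using gl by (subst (asm) ge_def2) auto
    with less size_lo[OF gl] show False by auto
  qed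
qed

lemma ge_trans_aux: "\<forall>x y z. size x + size y + size z = n \<longrightarrow> game_ge x y \<longrightarrow> game_ge y z \<longrightarrow> game_ge x z"
proof (induction n rule: less_induct)
  case (less n)
  show ?case
  proof (intro allI impI)
    fix x y z assume n: "size x + size y + size z = n" and xy: "game_ge x y" and yz: "game_ge y z"
    show "game_ge x z"
    proof (subst ge_def2, intro conjI ballI notI)
      fix xr assume xr: "xr \<in> set (ro x)" and h: "game_ge z xr"
      have "game_ge y xr" using less[rule_format, OF _ refl yz h] size_ro[OF xr] n by auto
      moreover have "\<not> game_ge y xr" using xy xr by (subst (asm) ge_def2) auto
      ultimately show False by auto
    next
      fix zl assume zl: "zl \<in> set (lo z)" and h: "game_ge zl x"
      have "game_ge zl y" using less[rule_format, OF _ refl h xy] size_lo[OF zl] n by auto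
      moreover have "\<not> game_ge zl y" using yz zl by (subst (asm) ge_def2) auto
      ultimately show False by auto
    qed
  qed
qed

lemma ge_trans: "game_ge x y \<Longrightarrow> game_ge y z \<Longrightarrow> game_ge x z"
  using ge_trans_aux by blast

lemma eq_refl: "game_eq G G" by (simp add: game_eq_def ge_refl)
lemma eq_sym: "game_eq G H \<Longrightarrow> game_eq H G" by (auto simp: game_eq_def)
lemma eq_trans: "game_eq G H \<Longrightarrow> game_eq H K \<Longrightarrow> game_eq G K"
  by (auto simp: game_eq_def intro: ge_trans)

fun neg :: "pgame \<Rightarrow> pgame" where
  "neg (Game l r) = Game (map neg r) (map neg l)"

lemma lo_neg: "lo (neg G) = map neg (ro G)" by (cases G) auto
lemma ro_neg: "ro (neg G) = map neg (lo G)" by (cases G) auto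
lemma neg_neg: "neg (neg G) = G"
proof (induction G rule: measure_induct_rule[of size])
  case (less G)
  obtain l r where G: "G = Game l r" by (cases G)
  have "map (neg \<circ> neg) l = l" by (rule map_idI) (use less G size_opt_L in auto)
  moreover have "map (neg \<circ> neg) r = r" by (rule map_idI) (use less G size_opt_R in auto)
  ultimately show ?case by (simp add: G)
qed

lemma ge_neg: "game_ge (neg G) (neg H) \<longleftrightarrow> game_ge H G"
proof (induction "size G + size H" arbitrary: G H rule: less_induct)
  case less
  have a: "\<And>gl. gl \<in> set (lo G) \<Longrightarrow> game_ge (neg H) (neg gl) = game_ge gl H"
    using less size_lo by force
  have b: "\<And>hr. hr \<in> set (ro H) \<Longrightarrow> game_ge (neg hr) (neg G) = game_ge G hr"
    using less size_ro by force
  show ?case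
    by (subst ge_def2, subst (2) ge_def2) (auto simp: lo_neg ro_neg a b)
qed

definition NF :: "pgame set" where "NF = {num_game k m | k m. True}"

fun nv :: "pgame \<Rightarrow> real" where
  "nv (Game [] []) = 0"
| "nv (Game [l] []) = nv l + 1"
| "nv (Game [] [r]) = nv r - 1"
| "nv (Game [l] [r]) = (nv l + nv r) / 2"
| "nv _ = 0"

lemma int_NF: "int_game m \<in> NF"
proof -
  have "int_game m = num_game 0 m" by simp
  then show ?thesis unfolding NF_def by blast
qed

lemma num_NF: "num_game k m \<in> NF"
  unfolding NF_def by blast

lemma nv_pos: "nv (pos_int_game n) = real n"
  by (induction n) auto
lemma nv_negi: "nv (neg_int_game n) = - real n"
  by (induction n) auto
lemma nv_int: "nv (int_game m) = real_of_int m"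
  by (auto simp: int_game_def nv_pos nv_negi)

lemma odd_div2_real: "odd (m::int) \<Longrightarrow> real_of_int ((m - 1) div 2) = (real_of_int m - 1) / 2"
  by (elim oddE) simp
lemma odd_div2_real': "odd (m::int) \<Longrightarrow> real_of_int ((m + 1) div 2) = (real_of_int m + 1) / 2"
  by (elim oddE) simp

lemma nv_num: "nv (num_game k m) = real_of_int m / 2 ^ k"
proof (induction k arbitrary: m)
  case 0 then show ?case by (simp add: nv_int)
next
  case (Suc k)
  show ?case
  proof (cases "even m")
    case True
    then have h: "real_of_int (m div 2) = real_of_int m / 2" by (elim evenE) simp
    have "nv (num_game (Suc k) m) = nv (num_game k (m div 2))" using True by simp
    also have "\<dots> = real_of_int (m div 2) / 2 ^ k" by (rule Suc.IH)
    also have "\<dots> = real_of_int m / 2 ^ Suc k" unfolding h by (simp add: field_simps)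
    finally show ?thesis .
  next
    case False
    have "nv (num_game (Suc k) m) = (nv (num_game k ((m - 1) div 2)) + nv (num_game k ((m + 1) div 2))) / 2"
      using False by simp
    also have "\<dots> = (real_of_int ((m - 1) div 2) / 2 ^ k + real_of_int ((m + 1) div 2) / 2 ^ k) / 2"
      by (simp only: Suc.IH)
    also have "\<dots> = ((real_of_int m - 1) / 2 / 2 ^ k + (real_of_int m + 1) / 2 / 2 ^ k) / 2"
      using False odd_div2_real[of m] odd_div2_real'[of m] by presburger
    also have "\<dots> = real_of_int m / 2 ^ Suc k" by (simp add: field_simps)
    finally show ?thesis .
  qed
qed

lemma num_lowest: "\<exists>k' m'. num_game k m = num_game k' m' \<and> (k' = 0 \<or> odd m') \<and> real_of_int m / 2^k = real_of_int m' / 2^k'"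
proof (induction k arbitrary: m)
  case 0 then show ?case by blast
next
  case (Suc k)
  show ?case
  proof (cases "even m")
    case True
    obtain k' m' where h: "num_game k (m div 2) = num_game k' m'" "(k' = 0 \<or> odd m')"
        "real_of_int (m div 2) / 2^k = real_of_int m' / 2^k'" using Suc by blast
    have "real_of_int (m div 2) = real_of_int m / 2" using True by (elim evenE) simp
    then show ?thesis using True h by (rule_tac x=k' in exI, rule_tac x=m' in exI) auto
  next
    case False then show ?thesis by blast
  qed
qed

lemma lo_num_low:
  assumes "k = 0 \<or> odd m" "k > 0 \<or> m > 0"
  shows "\<exists>y. lo (num_game k m) = [y] \<and> y \<in> NF \<and> nv y = (real_of_int m - 1) / 2 ^ k"
proof (cases k)
  case 0
  then have "m > 0" using assms by auto
  then have "lo (num_game k m) = [int_game (m - 1)]"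
  proof -
    obtain n where n: "nat m = Suc n" using \<open>m > 0\<close> by (metis gr0_implies_Suc zero_less_nat_eq)
    then have "nat (m - 1) = n" by simp
    then show ?thesis using 0 n \<open>m > 0\<close> by (simp add: int_game_def)
  qed
  moreover have "int_game (m - 1) \<in> NF" by (rule int_NF)
  ultimately show ?thesis using 0 by (auto simp: nv_int)
next
  case (Suc k')
  then have "odd m" using assms by auto
  then show ?thesis using Suc
    using odd_div2_real[of m] by (auto simp: num_NF nv_num field_simps)
qed

lemma ro_num_low:
  assumes "k = 0 \<or> odd m" "k > 0 \<or> m < 0"
  shows "\<exists>y. ro (num_game k m) = [y] \<and> y \<in> NF \<and> nv y = (real_of_int m + 1) / 2 ^ k"
proof (cases k)
  case 0
  then have "m < 0" using assms by auto
  then have "ro (num_game k m) = [int_game (m + 1)]"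
  proof -
    obtain n where n: "nat (- m) = Suc n" using \<open>m < 0\<close> by (metis gr0_implies_Suc zero_less_nat_eq neg_0_less_iff_less)
    then have "nat (- (m + 1)) = n" by simp
    moreover have "m + 1 = 0 \<Longrightarrow> n = 0" using n by simp
    ultimately show ?thesis using 0 n \<open>m < 0\<close> by (cases "m + 1 = 0") (auto simp: int_game_def)
  qed
  moreover have "int_game (m + 1) \<in> NF" by (rule int_NF)
  ultimately show ?thesis using 0 by (auto simp: nv_int)
next
  case (Suc k')
  then have "odd m" using assms by auto
  then show ?thesis using Suc
    using odd_div2_real'[of m] by (auto simp: num_NF nv_num field_simps)
qed

lemma lo_num_empty: "m \<le> 0 \<Longrightarrow> lo (num_game 0 m) = []"
proof (cases "m = 0")
  case True then show ?thesis by (simp add: int_game_def)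
next
  case False
  assume "m \<le> 0"
  then obtain n where "nat (- m) = Suc n" using False by (metis gr0_implies_Suc zero_less_nat_eq neg_0_less_iff_less order_le_less)
  then show ?thesis using \<open>m \<le> 0\<close> False by (simp add: int_game_def)
qed

lemma ro_num_empty: "m \<ge> 0 \<Longrightarrow> ro (num_game 0 m) = []"
  by (simp add: int_game_def) (cases "nat m", auto)

lemma NF_lowest: "x \<in> NF \<Longrightarrow> \<exists>k m. x = num_game k m \<and> (k = 0 \<or> odd m)"
  unfolding NF_def using num_lowest by blast

lemma NF_lo: assumes "x \<in> NF" "y \<in> set (lo x)" shows "y \<in> NF \<and> nv y < nv x"
proof -
  obtain k m where x: "x = num_game k m" "k = 0 \<or> odd m" using NF_lowest assms(1) by blast
  have "k > 0 \<or> m > 0" using lo_num_empty[of m] x assms(2) by (cases k) force+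
  then obtain y0 where "lo x = [y0]" "y0 \<in> NF" "nv y0 = (real_of_int m - 1) / 2 ^ k"
    using lo_num_low x by blast
  then show ?thesis using assms(2) x by (auto simp: nv_num divide_strict_right_mono)
qed

lemma NF_ro: assumes "x \<in> NF" "y \<in> set (ro x)" shows "y \<in> NF \<and> nv y > nv x"
proof -
  obtain k m where x: "x = num_game k m" "k = 0 \<or> odd m" using NF_lowest assms(1) by blast
  have "k > 0 \<or> m < 0" using ro_num_empty[of m] x assms(2) by (cases k) force+
  then obtain y0 where "ro x = [y0]" "y0 \<in> NF" "nv y0 = (real_of_int m + 1) / 2 ^ k"
    using ro_num_low x by blast
  then show ?thesis using assms(2) x by (auto simp: nv_num divide_strict_right_mono)
qed

lemma cross1: assumes "real_of_int m / 2^k < real_of_int p / 2^j" "j \<le> k"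
  shows "m < p * 2^(k-j)"
proof -
  have e: "(2::real)^k = 2^j * 2^(k-j)" using assms(2) by (simp add: power_add[symmetric])
  have "real_of_int m < real_of_int (p * 2^(k-j))" using assms(1) unfolding e by (simp add: field_simps)
  then show ?thesis by (simp only: of_int_less_iff)
qed

lemma cross2: assumes "real_of_int m / 2^k < real_of_int p / 2^j" "k \<le> j"
  shows "m * 2^(j-k) < p"
proof -
  have e: "(2::real)^j = 2^k * 2^(j-k)" using assms(2) by (simp add: power_add[symmetric])
  have "real_of_int (m * 2^(j-k)) < real_of_int p" using assms(1) unfolding e by (simp add: field_simps)
  then show ?thesis by (simp only: of_int_less_iff)
qed

lemma key_NF:
  assumes "x \<in> NF" "y \<in> NF" "nv x < nv y"
  shows "(\<exists>xr\<in>set (ro x). nv xr \<le> nv y) \<or> (\<exists>yl\<in>set (lo y). nv x \<le> nv yl)"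
proof -
  obtain k m where x: "x = num_game k m" "k = 0 \<or> odd m" using NF_lowest assms(1) by blast
  obtain j p where y: "y = num_game j p" "j = 0 \<or> odd p" using NF_lowest assms(2) by blast
  have lt: "real_of_int m / 2^k < real_of_int p / 2^j" using assms(3) x y by (simp add: nv_num)
  show ?thesis
  proof (cases "j \<le> k")
    case True
    note c1 = cross1[OF lt True]
    show ?thesis
    proof (cases "k > 0 \<or> m < 0")
      case True
      then obtain xr where xr: "ro x = [xr]" "nv xr = (real_of_int m + 1) / 2 ^ k"
        using ro_num_low x by blast
      have "m + 1 \<le> p * 2^(k-j)" using c1 by simp
      then have "real_of_int (m + 1) \<le> real_of_int (p * 2^(k-j))"
        by (simp only: of_int_le_iff)
      then have "real_of_int m + 1 \<le> real_of_int p * 2^(k-j)" by simp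
      moreover have e: "(2::real)^k = 2^j * 2^(k-j)" using \<open>j \<le> k\<close> by (simp add: power_add[symmetric])
      ultimately have "(real_of_int m + 1) / 2 ^ k \<le> (real_of_int p * 2^(k-j)) / 2^k"
        by (intro divide_right_mono) auto
      also have "\<dots> = real_of_int p / 2^j" unfolding e by simp
      finally have "(real_of_int m + 1) / 2 ^ k \<le> real_of_int p / 2^j" .
      then show ?thesis using xr y by (auto simp: nv_num)
    next
      case False
      then have "k = 0" "m \<ge> 0" by auto
      then have "j = 0" using True by simp
      then have "p > 0" using c1 \<open>k = 0\<close> \<open>m \<ge> 0\<close> by simp
      then obtain yl where yl: "lo y = [yl]" "nv yl = (real_of_int p - 1) / 2 ^ j"
        using lo_num_low y by blast
      have "m \<le> p - 1" using c1 \<open>k = 0\<close> \<open>j = 0\<close> by simp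
      then have "real_of_int m \<le> real_of_int p - 1" by linarith
      then show ?thesis using yl x \<open>k = 0\<close> \<open>j = 0\<close> by (auto simp: nv_int)
    qed
  next
    case False
    then have jk: "k \<le> j" "j > 0" by auto
    then have "odd p" using y by auto
    then obtain yl where yl: "lo y = [yl]" "nv yl = (real_of_int p - 1) / 2 ^ j"
      using lo_num_low y jk by blast
    have "m * 2^(j-k) \<le> p - 1" using cross2[OF lt jk(1)] by simp
    then have "real_of_int (m * 2^(j-k)) \<le> real_of_int (p - 1)"
      by (simp only: of_int_le_iff)
    then have hh: "real_of_int m * 2^(j-k) \<le> real_of_int p - 1" by simp
    have e: "(2::real)^j = 2^k * 2^(j-k)" using jk by (simp add: power_add[symmetric])
    have "real_of_int m / 2 ^ k = (real_of_int m * 2^(j-k)) / 2^j" unfolding e by simp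
    also have "\<dots> \<le> (real_of_int p - 1) / 2^j" using hh by (intro divide_right_mono) auto
    finally have "real_of_int m / 2 ^ k \<le> (real_of_int p - 1) / 2^j" .
    then show ?thesis using yl x by (auto simp: nv_num)
  qed
qed

lemma cmp_NF: "x \<in> NF \<Longrightarrow> y \<in> NF \<Longrightarrow> game_ge x y \<longleftrightarrow> nv y \<le> nv x"
proof (induction "size x + size y" arbitrary: x y rule: less_induct)
  case less
  have IH1: "\<And>xr. xr \<in> set (ro x) \<Longrightarrow> game_ge y xr \<longleftrightarrow> nv xr \<le> nv y"
    using less NF_ro size_ro by (metis add.commute add_strict_left_mono)
  have IH2: "\<And>yl. yl \<in> set (lo y) \<Longrightarrow> game_ge yl x \<longleftrightarrow> nv x \<le> nv yl"
    using less NF_lo size_lo by (metis add.commute add_strict_left_mono)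
  have "game_ge x y \<longleftrightarrow> (\<forall>xr\<in>set (ro x). nv y < nv xr) \<and> (\<forall>yl\<in>set (lo y). nv yl < nv x)"
    by (subst ge_def2) (auto simp: IH1 IH2 not_le)
  also have "\<dots> \<longleftrightarrow> nv y \<le> nv x"
  proof
    assume h: "(\<forall>xr\<in>set (ro x). nv y < nv xr) \<and> (\<forall>yl\<in>set (lo y). nv yl < nv x)"
    show "nv y \<le> nv x"
    proof (rule ccontr)
      assume "\<not> nv y \<le> nv x"
      then have "nv x < nv y" by simp
      from key_NF[OF less(2,3) this] h show False by force
    qed
  next
    assume "nv y \<le> nv x"
    then show "(\<forall>xr\<in>set (ro x). nv y < nv xr) \<and> (\<forall>yl\<in>set (lo y). nv yl < nv x)"
      using NF_lo[OF less(3)] NF_ro[OF less(2)] by force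
  qed
  finally show ?case .
qed

lemma eq_NF_unique: "game_eq G x \<Longrightarrow> game_eq G y \<Longrightarrow> x \<in> NF \<Longrightarrow> y \<in> NF \<Longrightarrow> nv x = nv y"
  by (meson antisym cmp_NF eq_sym eq_trans game_eq_def)

lemma number_value_NF:
  assumes "x \<in> NF" "game_eq G x"
  shows "is_number G" "number_value G = nv x"
proof -
  obtain k m where x: "x = num_game k m" using assms(1) unfolding NF_def by blast
  show "is_number G" unfolding is_number_def using assms x by blast
  show "number_value G = nv x"
    unfolding number_value_def
  proof (rule the_equality)
    show "\<exists>k m. nv x = real_of_int m / 2 ^ k \<and> game_eq G (num_game k m)"
      using assms x by (auto simp: nv_num)
  next
    fix v assume "\<exists>k m. v = real_of_int m / 2 ^ k \<and> game_eq G (num_game k m)"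
    then obtain k' m' where "v = real_of_int m' / 2 ^ k'" "game_eq G (num_game k' m')" by blast
    then show "v = nv x" using eq_NF_unique[OF assms(2) _ assms(1), of "num_game k' m'"]
      by (auto simp: nv_num num_NF)
  qed
qed

lemma is_number_NF: "is_number G \<Longrightarrow> \<exists>x\<in>NF. game_eq G x"
  unfolding is_number_def NF_def by blast

lemma simplicity:
  assumes "x \<in> NF" "\<forall>gl\<in>set (lo G). \<not> game_ge gl x" "\<forall>gr\<in>set (ro G). \<not> game_ge x gr"
  shows "is_number G"
proof -
  define P where "P x \<longleftrightarrow> x \<in> NF \<and> (\<forall>gl\<in>set (lo G). \<not> game_ge gl x) \<and> (\<forall>gr\<in>set (ro G). \<not> game_ge x gr)" for x
  have "P x" using assms P_def by blast
  then obtain z where z: "P z" "\<And>w. P w \<Longrightarrow> size z \<le> size w"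
    using ex_has_least_nat[of P x size] by blast
  have zNF: "z \<in> NF" using z P_def by blast
  have "game_ge G z"
  proof (subst ge_def2, intro conjI ballI notI)
    fix gr assume "gr \<in> set (ro G)" "game_ge z gr" then show False using z(1) P_def by blast
  next
    fix zl assume zl: "zl \<in> set (lo z)" and h: "game_ge zl G"
    have zlNF: "zl \<in> NF" "nv zl < nv z" using NF_lo[OF zNF zl] by auto
    have "\<not> P zl" using z(2) size_lo[OF zl] by force
    then consider gl where "gl \<in> set (lo G)" "game_ge gl zl" | gr where "gr \<in> set (ro G)" "game_ge zl gr"
      using zlNF P_def by blast
    then show False
    proof cases
      case 1
      then show False using h by (subst (asm) ge_def2) auto
    next
      case 2
      have "game_ge z zl" using cmp_NF zNF zlNF by auto
      then have "game_ge z gr" using 2 ge_trans by blast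
      then show False using z(1) 2 P_def by blast
    qed
  qed
  moreover have "game_ge z G"
  proof (subst ge_def2, intro conjI ballI notI)
    fix gl assume "gl \<in> set (lo G)" "game_ge gl z" then show False using z(1) P_def by blast
  next
    fix zr assume zr: "zr \<in> set (ro z)" and h: "game_ge G zr"
    have zrNF: "zr \<in> NF" "nv zr > nv z" using NF_ro[OF zNF zr] by auto
    have "\<not> P zr" using z(2) size_ro[OF zr] by force
    then consider gl where "gl \<in> set (lo G)" "game_ge gl zr" | gr where "gr \<in> set (ro G)" "game_ge zr gr"
      using zrNF P_def by blast
    then show False
    proof cases
      case 2
      then show False using h by (subst (asm) ge_def2) auto
    next
      case 1
      have "game_ge zr z" using cmp_NF zNF zrNF by auto
      then have "game_ge gl z" using 1 ge_trans by blast
      then show False using z(1) 1 P_def by blast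
    qed
  qed
  ultimately show ?thesis using number_value_NF(1)[OF zNF] game_eq_def by blast
qed

abbreviation LW :: "pgame \<Rightarrow> real \<Rightarrow> real" where "LW G \<equiv> fst (thermo_walls G)"
abbreviation RW :: "pgame \<Rightarrow> real \<Rightarrow> real" where "RW G \<equiv> snd (thermo_walls G)"

definition SLg :: "pgame \<Rightarrow> real \<Rightarrow> real" where "SLg G = scaffold_L (map thermo_walls (lo G))"
definition SRg :: "pgame \<Rightarrow> real \<Rightarrow> real" where "SRg G = scaffold_R (map thermo_walls (ro G))"
definition tsg :: "pgame \<Rightarrow> real" where "tsg G = crit_temp (map thermo_walls (lo G)) (map thermo_walls (ro G))"

lemma walls_num: "is_number G \<Longrightarrow> LW G t = number_value G \<and> RW G t = number_value G"
  by (cases G) simp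

lemma walls_nn: "\<not> is_number G \<Longrightarrow>
   LW G t = (if t \<le> tsg G then SLg G t else SLg G (tsg G)) \<and>
   RW G t = (if t \<le> tsg G then SRg G t else SLg G (tsg G))"
  by (cases G) (simp add: Let_def SLg_def SRg_def tsg_def)

lemma SLg_eq: "SLg G t = Max ((\<lambda>g. RW g t - t) ` set (lo G))"
  unfolding SLg_def scaffold_L_def by (simp add: image_image)
lemma SRg_eq: "SRg G t = Min ((\<lambda>g. LW g t + t) ` set (ro G))"
  unfolding SRg_def scaffold_R_def by (simp add: image_image)

lemma SLg_ge: "g \<in> set (lo G) \<Longrightarrow> RW g t - t \<le> SLg G t"
  unfolding SLg_eq by (rule Max_ge) auto
lemma SLg_le: "lo G \<noteq> [] \<Longrightarrow> (\<And>g. g \<in> set (lo G) \<Longrightarrow> RW g t - t \<le> c) \<Longrightarrow> SLg G t \<le> c"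
  unfolding SLg_eq by (subst Max_le_iff) auto
lemma SRg_le: "g \<in> set (ro G) \<Longrightarrow> SRg G t \<le> LW g t + t"
  unfolding SRg_eq by (rule Min_le) auto
lemma SRg_ge: "ro G \<noteq> [] \<Longrightarrow> (\<And>g. g \<in> set (ro G) \<Longrightarrow> c \<le> LW g t + t) \<Longrightarrow> c \<le> SRg G t"
  unfolding SRg_eq by (subst Min_ge_iff) auto

lemma SLg_empty: "lo G = [] \<Longrightarrow> SLg G t = Max {}"
  unfolding SLg_eq by simp
lemma SRg_empty: "ro G = [] \<Longrightarrow> SRg G t = Min {}"
  unfolding SRg_eq by simp

lemma zero_is_number: "is_number (Game [] [])"
proof -
  have "Game [] [] = num_game 0 0" by (simp add: int_game_def)
  then show ?thesis using number_value_NF(1)[OF num_NF eq_refl] by metis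
qed

lemma finite_bound:
  fixes f :: "'a \<Rightarrow> real \<Rightarrow> real"
  shows "finite A \<Longrightarrow> (\<forall>x\<in>A. \<exists>B. \<forall>t\<ge>-1. f x t \<le> B) \<Longrightarrow> \<exists>B\<ge>0. \<forall>x\<in>A. \<forall>t\<ge>-1. f x t \<le> (B::real)"
proof (induction A rule: finite_induct)
  case empty then show ?case by auto
next
  case (insert a A)
  then obtain B where B: "B \<ge> 0" "\<forall>x\<in>A. \<forall>t\<ge>-1. f x t \<le> B" by auto
  obtain B' where B': "\<forall>t\<ge>-1. f a t \<le> B'" using insert by auto
  show ?case
  proof (rule exI[of _ "max B B'"], intro conjI ballI allI impI)
    show "0 \<le> max B B'" using B by simp
    fix x t assume "x \<in> insert a A" "(t::real) \<ge> -1"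
    then show "f x t \<le> max B B'" using B B' by (metis insert_iff max.coboundedI1 max.coboundedI2)
  qed
qed

lemma walls_bounded: "\<exists>B. \<forall>t\<ge>-1. \<bar>LW G t\<bar> \<le> B \<and> \<bar>RW G t\<bar> \<le> B"
proof (induction G rule: measure_induct_rule[of size])
  case (less G)
  show ?case
  proof (cases "is_number G")
    case True then show ?thesis using walls_num by auto
  next
    case False
    have "\<exists>B\<ge>0. \<forall>g\<in>set (lo G) \<union> set (ro G). \<forall>t\<ge>-1. max \<bar>LW g t\<bar> \<bar>RW g t\<bar> \<le> B"
      by (rule finite_bound) (use less size_lo size_ro in \<open>fastforce\<close>)+
    then obtain B where B: "B \<ge> 0" "\<And>g t. g \<in> set (lo G) \<union> set (ro G) \<Longrightarrow> t \<ge> -1 \<Longrightarrow> \<bar>LW g t\<bar> \<le> B \<and> \<bar>RW g t\<bar> \<le> B"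
      by auto
    define c where "c = \<bar>Max ({}::real set)\<bar> + \<bar>Min ({}::real set)\<bar>"
    have sl: "\<bar>SLg G t\<bar> \<le> B + \<bar>t\<bar> + c" if "t \<ge> -1" for t
    proof (cases "lo G = []")
      case True then show ?thesis using SLg_empty B c_def by auto
    next
      case False
      have "SLg G t \<in> (\<lambda>g. RW g t - t) ` set (lo G)" unfolding SLg_eq by (rule Max_in) (use False in auto)
      then obtain g where "g \<in> set (lo G)" "SLg G t = RW g t - t" by auto
      then show ?thesis using B(2)[of g t] that c_def by auto
    qed
    have sr: "\<bar>SRg G t\<bar> \<le> B + \<bar>t\<bar> + c" if "t \<ge> -1" for t
    proof (cases "ro G = []")
      case True then show ?thesis using SRg_empty B c_def by auto
    next
      case False
      have "SRg G t \<in> (\<lambda>g. LW g t + t) ` set (ro G)" unfolding SRg_eq by (rule Min_in) (use False in auto)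
      then obtain g where "g \<in> set (ro G)" "SRg G t = LW g t + t" by auto
      then show ?thesis using B(2)[of g t] that c_def by auto
    qed
    show ?thesis
    proof (rule exI[of _ "B + 1 + \<bar>tsg G\<bar> + c + \<bar>SLg G (tsg G)\<bar>"], intro allI impI)
      fix t :: real assume t: "t \<ge> -1"
      show "\<bar>LW G t\<bar> \<le> B + 1 + \<bar>tsg G\<bar> + c + \<bar>SLg G (tsg G)\<bar> \<and> \<bar>RW G t\<bar> \<le> B + 1 + \<bar>tsg G\<bar> + c + \<bar>SLg G (tsg G)\<bar>"
      proof (cases "t \<le> tsg G")
        case True
        then have "\<bar>t\<bar> \<le> 1 + \<bar>tsg G\<bar>" using t by auto
        then show ?thesis using walls_nn[OF False, of t] True sl[OF t] sr[OF t] by auto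
      next
        case f: False
        have "0 \<le> B + 1 + \<bar>tsg G\<bar> + c" using B(1) c_def by auto
        then show ?thesis using walls_nn[OF False, of t] f by auto
      qed
    qed
  qed
qed

definition Sg :: "pgame \<Rightarrow> real set" where "Sg G = {t. -1 \<le> t \<and> SLg G t \<le> SRg G t}"

lemma tsg_Inf: "tsg G = Inf (Sg G)"
  unfolding tsg_def crit_temp_def Sg_def SLg_def SRg_def by simp

lemma Sg_ne:
  assumes "\<not> is_number G" shows "Sg G \<noteq> {}"
proof -
  have "\<exists>B\<ge>0. \<forall>g\<in>set (lo G) \<union> set (ro G). \<forall>t\<ge>-1. max \<bar>LW g t\<bar> \<bar>RW g t\<bar> \<le> B"
    by (rule finite_bound) (use walls_bounded in \<open>fastforce\<close>)+
  then obtain B where B: "B \<ge> 0" "\<And>g t. g \<in> set (lo G) \<union> set (ro G) \<Longrightarrow> t \<ge> -1 \<Longrightarrow> \<bar>LW g t\<bar> \<le> B \<and> \<bar>RW g t\<bar> \<le> B"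
    by auto
  have ne: "lo G \<noteq> [] \<or> ro G \<noteq> []"
    using assms zero_is_number by (cases G) auto
  define t0 where "t0 = B + \<bar>Max ({}::real set)\<bar> + \<bar>Min ({}::real set)\<bar>"
  have t0: "t0 \<ge> -1" "t0 \<ge> B" using B(1) t0_def by auto
  have sl: "SLg G t0 \<le> (if lo G = [] then \<bar>Max ({}::real set)\<bar> else B - t0)"
  proof (cases "lo G = []")
    case True then show ?thesis using SLg_empty by simp
  next
    case False
    have "SLg G t0 \<le> B - t0"
      by (rule SLg_le[OF False]) (use B(2) t0 in \<open>fastforce\<close>)
    then show ?thesis using False by simp
  qed
  have sr: "SRg G t0 \<ge> (if ro G = [] then - \<bar>Min ({}::real set)\<bar> else t0 - B)"
  proof (cases "ro G = []")
    case True then show ?thesis using SRg_empty by simp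
  next
    case False
    have "t0 - B \<le> SRg G t0"
      by (rule SRg_ge[OF False]) (use B(2) t0 in \<open>fastforce\<close>)
    then show ?thesis using False by simp
  qed
  have a1: "0 \<le> \<bar>Max ({}::real set)\<bar>" "0 \<le> \<bar>Min ({}::real set)\<bar>" by auto
  have "SLg G t0 \<le> SRg G t0"
  proof (cases "lo G = []")
    case True
    then have "ro G \<noteq> []" using ne by auto
    then have "SLg G t0 \<le> \<bar>Max ({}::real set)\<bar>" "t0 - B \<le> SRg G t0" using sl sr True by auto
    then show ?thesis using t0_def a1 by linarith
  next
    case False
    then have h: "SLg G t0 \<le> B - t0" using sl by auto
    show ?thesis
    proof (cases "ro G = []")
      case True
      then have "- \<bar>Min ({}::real set)\<bar> \<le> SRg G t0" using sr by auto
      then show ?thesis using h t0_def a1 by linarith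
    next
      case False
      then have "t0 - B \<le> SRg G t0" using sr by auto
      then show ?thesis using h t0_def a1 B(1) by linarith
    qed
  qed
  then show ?thesis unfolding Sg_def using t0 by blast
qed

lemma Sg_bdd: "bdd_below (Sg G)"
  unfolding Sg_def by (rule bdd_belowI[of _ "-1"]) auto

lemma tsg_ge: "\<not> is_number G \<Longrightarrow> -1 \<le> tsg G"
  unfolding tsg_Inf by (rule cInf_greatest[OF Sg_ne]) (auto simp: Sg_def)

lemma tsg_le: "t \<in> Sg G \<Longrightarrow> tsg G \<le> t"
  unfolding tsg_Inf by (rule cInf_lower[OF _ Sg_bdd])

fun gd :: "pgame \<Rightarrow> bool" where
  "gd (Game GL GR) \<longleftrightarrow> ((GL = [] \<or> GR = []) \<longrightarrow> is_number (Game GL GR)) \<and> (\<forall>g\<in>set GL. gd g) \<and> (\<forall>g\<in>set GR. gd g)"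

lemma gd_lo: "gd G \<Longrightarrow> g \<in> set (lo G) \<Longrightarrow> gd g" by (cases G) auto
lemma gd_ro: "gd G \<Longrightarrow> g \<in> set (ro G) \<Longrightarrow> gd g" by (cases G) auto
lemma gd_nn: "gd G \<Longrightarrow> \<not> is_number G \<Longrightarrow> lo G \<noteq> [] \<and> ro G \<noteq> []" by (cases G) auto

lemma num_ge_val: assumes "is_number G" "x \<in> NF" "game_ge G x" shows "nv x \<le> number_value G"
proof -
  obtain N where N: "N \<in> NF" "game_eq G N" using is_number_NF assms(1) by blast
  have "game_ge N x" using N(2) assms(3) ge_trans game_eq_def by blast
  then show ?thesis using cmp_NF N assms(2) number_value_NF(2) by auto
qed
lemma num_nge_val: assumes "is_number G" "x \<in> NF" "\<not> game_ge x G" shows "nv x < number_value G"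
proof -
  obtain N where N: "N \<in> NF" "game_eq G N" using is_number_NF assms(1) by blast
  have "\<not> game_ge x N" using N(2) assms(3) ge_trans game_eq_def by blast
  then show ?thesis using cmp_NF N assms(2) number_value_NF(2) by auto
qed
lemma num_le_val: assumes "is_number G" "x \<in> NF" "game_ge x G" shows "number_value G \<le> nv x"
proof -
  obtain N where N: "N \<in> NF" "game_eq G N" using is_number_NF assms(1) by blast
  have "game_ge x N" using N(2) assms(3) ge_trans game_eq_def by blast
  then show ?thesis using cmp_NF N assms(2) number_value_NF(2) by auto
qed
lemma num_nle_val: assumes "is_number G" "x \<in> NF" "\<not> game_ge G x" shows "number_value G < nv x"
proof -
  obtain N where N: "N \<in> NF" "game_eq G N" using is_number_NF assms(1) by blast
  have "\<not> game_ge N x" using N(2) assms(3) ge_trans game_eq_def by blast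
  then show ?thesis using cmp_NF N assms(2) number_value_NF(2) by auto
qed

lemma not_ge_cases: "\<not> game_ge x H \<Longrightarrow> (\<exists>xr\<in>set (ro x). game_ge H xr) \<or> (\<exists>hl\<in>set (lo H). game_ge hl x)"
  by (subst (asm) ge_def2) auto

lemma eq_NF_number: "x \<in> NF \<Longrightarrow> game_ge H x \<Longrightarrow> game_ge x H \<Longrightarrow> is_number H"
  using number_value_NF(1) game_eq_def by blast

locale wallrep =
  fixes A :: "real set"
  assumes A1: "\<And>t. t \<in> A \<Longrightarrow> -1 \<le> t"
  and A2: "\<And>t s. t \<in> A \<Longrightarrow> -1 \<le> s \<Longrightarrow> s \<le> t \<Longrightarrow> s \<in> A"
  and rep: "\<And>G t. gd G \<Longrightarrow> \<not> is_number G \<Longrightarrow> t \<in> A \<Longrightarrow>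
      LW G t = SLg G (min t (tsg G)) \<and> RW G t = SRg G (min t (tsg G))"
begin

lemma minA: "gd G \<Longrightarrow> \<not> is_number G \<Longrightarrow> t \<in> A \<Longrightarrow> min t (tsg G) \<in> A \<and> min t (tsg G) \<le> t"
  using A1 A2 tsg_ge by (metis min.cobounded1 min_def)

lemma primal_aux:
  "\<forall>G x t. size G + size x = n \<longrightarrow> gd G \<longrightarrow> x \<in> NF \<longrightarrow> t \<in> A \<longrightarrow>
     (game_ge G x \<longrightarrow> nv x - 1 \<le> RW G t) \<and> (\<not> game_ge x G \<longrightarrow> nv x - 1 - t \<le> LW G t)"
proof (induction n rule: less_induct)
  case (less n)
  show ?case
  proof (intro allI impI)
    fix G x t assume n: "size G + size x = n" and g: "gd G" and x: "x \<in> NF" and t: "t \<in> A"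
    have t1: "-1 \<le> t" using A1 t by auto
    show "(game_ge G x \<longrightarrow> nv x - 1 \<le> RW G t) \<and> (\<not> game_ge x G \<longrightarrow> nv x - 1 - t \<le> LW G t)"
    proof (cases "is_number G")
      case True
      show ?thesis
        using num_ge_val[OF True x] num_nge_val[OF True x] walls_num[OF True, of t] t1 by force
    next
      case False
      define s where "s = min t (tsg G)"
      have sA: "s \<in> A" "s \<le> t" using minA[OF g False t] s_def by auto
      have ne: "lo G \<noteq> []" "ro G \<noteq> []" using gd_nn[OF g False] by auto
      have R: "RW G t = SRg G s" "LW G t = SLg G s" using rep[OF g False t] s_def by auto
      show ?thesis
      proof (intro conjI impI)
        assume ge: "game_ge G x"
        have "nv x - 1 \<le> SRg G s"
        proof (rule SRg_ge[OF ne(2)])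
          fix gr assume gr: "gr \<in> set (ro G)"
          have "\<not> game_ge x gr" using ge gr by (subst (asm) ge_def2) auto
          then have "nv x - 1 - s \<le> LW gr s"
            using less[rule_format, OF _ refl gd_ro[OF g gr] x sA(1)] size_ro[OF gr] n by auto
          then show "nv x - 1 \<le> LW gr s + s" by simp
        qed
        then show "nv x - 1 \<le> RW G t" using R by simp
      next
        assume nge: "\<not> game_ge x G"
        from not_ge_cases[OF nge] show "nv x - 1 - t \<le> LW G t"
        proof
          assume "\<exists>xr\<in>set (ro x). game_ge G xr"
          then obtain xr where xr: "xr \<in> set (ro x)" "game_ge G xr" by blast
          have xrNF: "xr \<in> NF" "nv x < nv xr" using NF_ro[OF x xr(1)] by auto
          have "\<not> game_ge xr G" using eq_NF_number[OF xrNF(1) xr(2)] False by blast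
          then have "nv xr - 1 - t \<le> LW G t"
            using less[rule_format, OF _ refl g xrNF(1) t] size_ro[OF xr(1)] n by auto
          then show ?thesis using xrNF by simp
        next
          assume "\<exists>hl\<in>set (lo G). game_ge hl x"
          then obtain hl where hl: "hl \<in> set (lo G)" "game_ge hl x" by blast
          have "nv x - 1 \<le> RW hl s"
            using less[rule_format, OF _ refl gd_lo[OF g hl(1)] x sA(1)] size_lo[OF hl(1)] n hl(2) by auto
          moreover have "RW hl s - s \<le> SLg G s" by (rule SLg_ge[OF hl(1)])
          ultimately show ?thesis using R sA(2) by simp
        qed
      qed
    qed
  qed
qed

lemma dual_aux:
  "\<forall>G x t. size G + size x = n \<longrightarrow> gd G \<longrightarrow> x \<in> NF \<longrightarrow> t \<in> A \<longrightarrow>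
     (game_ge x G \<longrightarrow> LW G t \<le> nv x + 1) \<and> (\<not> game_ge G x \<longrightarrow> RW G t \<le> nv x + 1 + t)"
proof (induction n rule: less_induct)
  case (less n)
  show ?case
  proof (intro allI impI)
    fix G x t assume n: "size G + size x = n" and g: "gd G" and x: "x \<in> NF" and t: "t \<in> A"
    have t1: "-1 \<le> t" using A1 t by auto
    show "(game_ge x G \<longrightarrow> LW G t \<le> nv x + 1) \<and> (\<not> game_ge G x \<longrightarrow> RW G t \<le> nv x + 1 + t)"
    proof (cases "is_number G")
      case True
      show ?thesis
        using num_le_val[OF True x] num_nle_val[OF True x] walls_num[OF True, of t] t1 by force
    next
      case False
      define s where "s = min t (tsg G)"
      have sA: "s \<in> A" "s \<le> t" using minA[OF g False t] s_def by auto
      have ne: "lo G \<noteq> []" "ro G \<noteq> []" using gd_nn[OF g False] by auto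
      have R: "RW G t = SRg G s" "LW G t = SLg G s" using rep[OF g False t] s_def by auto
      show ?thesis
      proof (intro conjI impI)
        assume ge: "game_ge x G"
        have "SLg G s \<le> nv x + 1"
        proof (rule SLg_le[OF ne(1)])
          fix gl assume gl: "gl \<in> set (lo G)"
          have "\<not> game_ge gl x" using ge gl by (subst (asm) ge_def2) auto
          then have "RW gl s \<le> nv x + 1 + s"
            using less[rule_format, OF _ refl gd_lo[OF g gl] x sA(1)] size_lo[OF gl] n by auto
          then show "RW gl s - s \<le> nv x + 1" by simp
        qed
        then show "LW G t \<le> nv x + 1" using R by simp
      next
        assume nge: "\<not> game_ge G x"
        from not_ge_cases[OF nge] show "RW G t \<le> nv x + 1 + t"
        proof
          assume "\<exists>hr\<in>set (ro G). game_ge x hr"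
          then obtain hr where hr: "hr \<in> set (ro G)" "game_ge x hr" by blast
          have "LW hr s \<le> nv x + 1"
            using less[rule_format, OF _ refl gd_ro[OF g hr(1)] x sA(1)] size_ro[OF hr(1)] n hr(2) by auto
          moreover have "SRg G s \<le> LW hr s + s" by (rule SRg_le[OF hr(1)])
          ultimately show ?thesis using R sA(2) by simp
        next
          assume "\<exists>xl\<in>set (lo x). game_ge xl G"
          then obtain xl where xl: "xl \<in> set (lo x)" "game_ge xl G" by blast
          have xlNF: "xl \<in> NF" "nv xl < nv x" using NF_lo[OF x xl(1)] by auto
          have "\<not> game_ge G xl" using eq_NF_number[OF xlNF(1) _ xl(2)] False by blast
          then have "RW G t \<le> nv xl + 1 + t"
            using less[rule_format, OF _ refl g xlNF(1) t] size_lo[OF xl(1)] n by auto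
          then show ?thesis using xlNF by simp
        qed
      qed
    qed
  qed
qed

lemma primal: "gd G \<Longrightarrow> x \<in> NF \<Longrightarrow> t \<in> A \<Longrightarrow> game_ge G x \<Longrightarrow> nv x - 1 \<le> RW G t"
  using primal_aux by blast
lemma primal2: "gd G \<Longrightarrow> x \<in> NF \<Longrightarrow> t \<in> A \<Longrightarrow> \<not> game_ge x G \<Longrightarrow> nv x - 1 - t \<le> LW G t"
  using primal_aux by blast
lemma dual: "gd G \<Longrightarrow> x \<in> NF \<Longrightarrow> t \<in> A \<Longrightarrow> game_ge x G \<Longrightarrow> LW G t \<le> nv x + 1"
  using dual_aux by blast
lemma dual2: "gd G \<Longrightarrow> x \<in> NF \<Longrightarrow> t \<in> A \<Longrightarrow> \<not> game_ge G x \<Longrightarrow> RW G t \<le> nv x + 1 + t"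
  using dual_aux by blast

end

interpretation w1: wallrep "{-1}"
proof
  fix G t assume g: "gd G" "\<not> is_number G" "t \<in> {-1::real}"
  have "-1 \<le> tsg G" using tsg_ge g by auto
  then show "LW G t = SLg G (min t (tsg G)) \<and> RW G t = SRg G (min t (tsg G))"
    using walls_nn[OF g(2), of t] g(3) by (simp add: min_def)
qed auto

lemma dyadic_between:
  fixes a b :: real assumes "a < b"
  shows "\<exists>k m. a < real_of_int m / 2^k \<and> real_of_int m / 2^k < b"
proof -
  have "0 < b - a" using assms by simp
  then obtain n where n: "inverse (real (Suc n)) < b - a" using reals_Archimedean by blast
  have "real (Suc n) \<le> 2 ^ Suc n"
    using less_exp[of "Suc n"] by (metis of_nat_le_iff of_nat_numeral of_nat_power less_imp_le)
  then have "1 / (2::real) ^ Suc n \<le> inverse (real (Suc n))"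
    by (simp add: inverse_eq_divide frac_le)
  then have e: "1 / (2::real) ^ Suc n < b - a" using n by linarith
  define k where "k = Suc n"
  define m where "m = \<lfloor>a * 2^k\<rfloor> + 1"
  have p: "(0::real) < 2^k" by simp
  have m1: "a * 2^k < real_of_int m" unfolding m_def by linarith
  have m2: "real_of_int m \<le> a * 2^k + 1" unfolding m_def by linarith
  have "a < real_of_int m / 2^k" using m1 p by (simp add: field_simps)
  moreover have "real_of_int m / 2^k \<le> a + 1 / 2^k" using m2 p by (simp add: field_simps)
  ultimately show ?thesis using e k_def by (intro exI[of _ k] exI[of _ m]) auto
qed

lemma T_lemma:
  assumes g: "gd G" and nn: "\<not> is_number G"
  shows "SRg G (-1) \<le> SLg G (-1)"
proof (rule ccontr)
  assume "\<not> SRg G (-1) \<le> SLg G (-1)"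
  then obtain k m where km: "SLg G (-1) < real_of_int m / 2^k" "real_of_int m / 2^k < SRg G (-1)"
    using dyadic_between[of "SLg G (-1)" "SRg G (-1)"] by auto
  define x where "x = num_game k m"
  have x: "x \<in> NF" "nv x = real_of_int m / 2^k" using x_def num_NF nv_num by auto
  have "\<forall>gl\<in>set (lo G). \<not> game_ge gl x"
  proof (intro ballI notI)
    fix gl assume gl: "gl \<in> set (lo G)" and ge: "game_ge gl x"
    have "nv x - 1 \<le> RW gl (-1)" using w1.primal[OF gd_lo[OF g gl] x(1) _ ge] by simp
    moreover have "RW gl (-1) - (-1) \<le> SLg G (-1)" by (rule SLg_ge[OF gl])
    ultimately show False using km x by simp
  qed
  moreover have "\<forall>gr\<in>set (ro G). \<not> game_ge x gr"
  proof (intro ballI notI)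
    fix gr assume gr: "gr \<in> set (ro G)" and ge: "game_ge x gr"
    have "LW gr (-1) \<le> nv x + 1" using w1.dual[OF gd_ro[OF g gr] x(1) _ ge] by simp
    moreover have "SRg G (-1) \<le> LW gr (-1) + (-1)" by (rule SRg_le[OF gr])
    ultimately show False using km x by simp
  qed
  ultimately have "is_number G" using simplicity x(1) by blast
  then show False using nn by simp
qed

lemma cont_pos_nbhd:
  fixes f :: "real \<Rightarrow> real"
  assumes "continuous_on S f" "x \<in> S" "f x > 0"
  shows "\<exists>d>0. \<forall>y\<in>S. \<bar>y - x\<bar> < d \<longrightarrow> f y > 0"
proof -
  have "(f \<longlongrightarrow> f x) (at x within S)" using assms(1,2) continuous_on_def by blast
  then have "eventually (\<lambda>y. 0 < f y) (at x within S)" using assms(3) order_tendstoD(1) by blast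
  then obtain d where d: "d > 0" "\<forall>y\<in>S. y \<noteq> x \<and> dist y x < d \<longrightarrow> 0 < f y"
    unfolding eventually_at by blast
  show ?thesis using d assms(3) by (intro exI[of _ d]) (auto simp: dist_real_def)
qed

lemma cont_Max:
  fixes f :: "'a \<Rightarrow> real \<Rightarrow> real"
  shows "finite I \<Longrightarrow> I \<noteq> {} \<Longrightarrow> (\<forall>i\<in>I. continuous_on S (f i)) \<Longrightarrow> continuous_on S (\<lambda>t. Max ((\<lambda>i. f i t) ` I))"
proof (induction I rule: finite_ne_induct)
  case (singleton x) then show ?case by simp
next
  case (insert x F)
  have "(\<lambda>t. Max ((\<lambda>i. f i t) ` insert x F)) = (\<lambda>t. max (f x t) (Max ((\<lambda>i. f i t) ` F)))"
    using insert by (auto intro!: ext Max_insert)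
  then show ?case using insert by (auto intro!: continuous_on_max)
qed

lemma cont_Min:
  fixes f :: "'a \<Rightarrow> real \<Rightarrow> real"
  shows "finite I \<Longrightarrow> I \<noteq> {} \<Longrightarrow> (\<forall>i\<in>I. continuous_on S (f i)) \<Longrightarrow> continuous_on S (\<lambda>t. Min ((\<lambda>i. f i t) ` I))"
proof (induction I rule: finite_ne_induct)
  case (singleton x) then show ?case by simp
next
  case (insert x F)
  have "(\<lambda>t. Min ((\<lambda>i. f i t) ` insert x F)) = (\<lambda>t. min (f x t) (Min ((\<lambda>i. f i t) ` F)))"
    using insert by (auto intro!: ext Min_insert)
  then show ?case using insert by (auto intro!: continuous_on_min)
qed

lemma N_lemma: "gd G \<Longrightarrow> continuous_on {-1..} (LW G) \<and> continuous_on {-1..} (RW G) \<and>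
   (\<not> is_number G \<longrightarrow> SLg G (tsg G) = SRg G (tsg G))"
proof (induction G rule: measure_induct_rule[of size])
  case (less G)
  note g = less.prems
  show ?case
  proof (cases "is_number G")
    case True
    then show ?thesis using walls_num[OF True] by (simp add: continuous_on_const)
  next
    case False
    have ne: "lo G \<noteq> []" "ro G \<noteq> []" using gd_nn[OF g False] by auto
    have IH: "\<And>h. h \<in> set (lo G) \<union> set (ro G) \<Longrightarrow> continuous_on {-1..} (LW h) \<and> continuous_on {-1..} (RW h)"
      using less size_lo size_ro gd_lo gd_ro g by blast
    have cSL: "continuous_on {-1..} (SLg G)"
      unfolding SLg_eq using ne IH by (intro cont_Max) (auto intro!: continuous_on_diff)
    have cSR: "continuous_on {-1..} (SRg G)"
      unfolding SRg_eq using ne IH by (intro cont_Min) (auto intro!: continuous_on_add)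
    define ts where "ts = tsg G"
    have ts1: "-1 \<le> ts" using tsg_ge False ts_def by auto
    have a: "SLg G ts \<le> SRg G ts"
    proof (rule ccontr)
      assume "\<not> SLg G ts \<le> SRg G ts"
      then have "(\<lambda>t. SLg G t - SRg G t) ts > 0" by simp
      then obtain d where d: "d > 0" "\<forall>y\<in>{-1..}. \<bar>y - ts\<bar> < d \<longrightarrow> SLg G y - SRg G y > 0"
        using cont_pos_nbhd[of "{-1..}" "\<lambda>t. SLg G t - SRg G t" ts] cSL cSR ts1
        by (auto intro: continuous_on_diff)
      have "ts + d \<le> Inf (Sg G)"
      proof (rule cInf_greatest[OF Sg_ne[OF False]])
        fix s assume s: "s \<in> Sg G"
        have "ts \<le> s" using tsg_le[OF s] ts_def by simp
        moreover have "\<not> (\<bar>s - ts\<bar> < d)" using d s by (auto simp: Sg_def)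
        ultimately show "ts + d \<le> s" by auto
      qed
      then show False using d(1) ts_def tsg_Inf by simp
    qed
    have b: "SRg G ts \<le> SLg G ts"
    proof (cases "ts = -1")
      case True then show ?thesis using T_lemma[OF g False] by simp
    next
      case f: False
      then have ts2: "-1 < ts" using ts1 by simp
      show ?thesis
      proof (rule ccontr)
        assume "\<not> SRg G ts \<le> SLg G ts"
        then have "(\<lambda>t. SRg G t - SLg G t) ts > 0" by simp
        then obtain d where d: "d > 0" "\<forall>y\<in>{-1..}. \<bar>y - ts\<bar> < d \<longrightarrow> SRg G y - SLg G y > 0"
          using cont_pos_nbhd[of "{-1..}" "\<lambda>t. SRg G t - SLg G t" ts] cSL cSR ts1
          by (auto intro: continuous_on_diff)
        define y where "y = max (-1) (ts - d/2)"
        have y: "y \<in> {-1..}" "\<bar>y - ts\<bar> < d" "y < ts" using d(1) ts2 y_def by auto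
        then have "SLg G y < SRg G y" using d(2) by auto
        then have "y \<in> Sg G" using y(1) by (auto simp: Sg_def)
        then have "ts \<le> y" using tsg_le ts_def by simp
        then show False using y by simp
      qed
    qed
    have eq: "SLg G ts = SRg G ts" using a b by simp
    have LWe: "LW G = (\<lambda>t. SLg G (min t ts))"
      using walls_nn[OF False] ts_def by (auto intro!: ext simp: min_def)
    have RWe: "RW G = (\<lambda>t. SRg G (min t ts))"
      using walls_nn[OF False] ts_def eq by (auto intro!: ext simp: min_def)
    have im: "(\<lambda>t. min t ts) ` {-1..} \<subseteq> {-1..}" using ts1 by auto
    have cm: "continuous_on {-1..} (\<lambda>t::real. min t ts)" by (intro continuous_on_min continuous_on_id continuous_on_const)
    show ?thesis
      unfolding LWe RWe using continuous_on_compose2[OF cSL cm im] continuous_on_compose2[OF cSR cm im] eq ts_def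
      by auto
  qed
qed

interpretation w2: wallrep "{-1..}"
proof
  fix G t assume g: "gd G" "\<not> is_number G" "t \<in> {-1::real..}"
  have "SLg G (tsg G) = SRg G (tsg G)" using N_lemma g by blast
  then show "LW G t = SLg G (min t (tsg G)) \<and> RW G t = SRg G (min t (tsg G))"
    using walls_nn[OF g(2), of t] by (simp add: min_def)
qed auto

definition LA :: "nat set \<Rightarrow> (nat \<Rightarrow> nat \<Rightarrow> bool) \<Rightarrow> nat set \<Rightarrow> nat set \<Rightarrow> nat set" where
  "LA V E B R = {v \<in> V - B - R. \<forall>u\<in>R. \<not> E u v}"
definition RA :: "nat set \<Rightarrow> (nat \<Rightarrow> nat \<Rightarrow> bool) \<Rightarrow> nat set \<Rightarrow> nat set \<Rightarrow> nat set" where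
  "RA V E B R = {v \<in> V - B - R. \<forall>u\<in>B. \<not> E u v}"

lemma lo_snort: "finite V \<Longrightarrow> set (lo (snort_pos (Suc n) V E B R)) = (\<lambda>v. snort_pos n V E (insert v B) R) ` LA V E B R"
  by (simp add: LA_def)
lemma ro_snort: "finite V \<Longrightarrow> set (ro (snort_pos (Suc n) V E B R)) = (\<lambda>v. snort_pos n V E B (insert v R)) ` RA V E B R"
  by (simp add: RA_def)
lemma lo_snort0: "lo (snort_pos 0 V E B R) = []" by simp
lemma ro_snort0: "ro (snort_pos 0 V E B R) = []" by simp

lemma neg_pos: "neg (pos_int_game n) = neg_int_game n"
  by (induction n) auto
lemma neg_negi: "neg (neg_int_game n) = pos_int_game n"
  by (metis neg_neg neg_pos)
lemma neg_int: "neg (int_game b) = int_game (- b)"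
  by (auto simp: int_game_def neg_pos neg_negi)

lemma neg_num: "neg (num_game k m) = num_game k (- m)"
proof (induction k arbitrary: m)
  case 0 then show ?case by (simp add: neg_int)
next
  case (Suc k)
  show ?case
  proof (cases "even m")
    case True
    then have "(- m) div 2 = - (m div 2)" by (elim evenE) simp
    then show ?thesis using True Suc by simp
  next
    case False
    then have "(- m - 1) div 2 = - ((m + 1) div 2)" "(- m + 1) div 2 = - ((m - 1) div 2)"
      by (elim oddE, simp)+
    then show ?thesis using False Suc by simp
  qed
qed

lemma snort_Suc: "snort_pos (Suc n) V E B R = Game (map (\<lambda>v. snort_pos n V E (insert v B) R) (sorted_list_of_set (LA V E B R)))
   (map (\<lambda>v. snort_pos n V E B (insert v R)) (sorted_list_of_set (RA V E B R)))"
  by (simp add: LA_def RA_def)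

lemma neg_snort: "neg (snort_pos n V E B R) = snort_pos n V E R B"
proof (induction n arbitrary: B R)
  case 0 then show ?case by simp
next
  case (Suc n)
  have e: "V - B - R = V - R - B" by auto
  show ?case by (simp add: Suc e comp_def)
qed

lemma eq_neg: "game_eq (neg X) Y \<Longrightarrow> game_eq X (neg Y)"
  by (metis game_eq_def ge_neg neg_neg)

lemma lo_int_pos: "b > 0 \<Longrightarrow> lo (int_game b) = [int_game (b - 1)]"
proof -
  assume "b > 0"
  then obtain n where n: "nat b = Suc n" by (metis gr0_implies_Suc zero_less_nat_eq)
  then have "nat (b - 1) = n" by simp
  then show ?thesis using n \<open>b > 0\<close> by (simp add: int_game_def)
qed
lemma lo_int_np: "b \<le> 0 \<Longrightarrow> lo (int_game b) = []"
  using lo_num_empty[of b] by simp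
lemma ro_int_neg: "b < 0 \<Longrightarrow> ro (int_game b) = [int_game (b + 1)]"
proof -
  assume "b < 0"
  then obtain n where n: "nat (- b) = Suc n" by (metis gr0_implies_Suc zero_less_nat_eq neg_0_less_iff_less)
  then have "nat (- (b + 1)) = n" by simp
  moreover have "b + 1 = 0 \<Longrightarrow> n = 0" using n by simp
  ultimately show ?thesis using n \<open>b < 0\<close> by (cases "b + 1 = 0") (auto simp: int_game_def)
qed

lemma ge_intI:
  assumes "\<forall>xr\<in>set (ro X). \<not> game_ge (int_game b) xr"
    and "b > 0 \<Longrightarrow> \<exists>xl\<in>set (lo X). game_ge xl (int_game (b - 1))"
  shows "game_ge X (int_game b)"
proof (subst ge_def2, intro conjI ballI)
  show "\<And>gr. gr \<in> set (ro X) \<Longrightarrow> \<not> game_ge (int_game b) gr" using assms(1) by blast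
next
  fix hl assume hl: "hl \<in> set (lo (int_game b))"
  then have b: "b > 0" "hl = int_game (b - 1)" using lo_int_np[of b] lo_int_pos[of b] by (cases "b > 0"; auto)+
  then obtain xl where "xl \<in> set (lo X)" "game_ge xl (int_game (b - 1))" using assms(2) by blast
  then show "\<not> game_ge hl X" using b by (subst ge_def2) auto
qed

lemma nge_intI: "y \<in> set (lo xr) \<Longrightarrow> game_ge y (int_game b) \<Longrightarrow> \<not> game_ge (int_game b) xr"
  by (subst ge_def2) auto

lemma zero_ge_negint: "b \<le> 0 \<Longrightarrow> game_ge (Game [] []) (int_game b)"
  by (subst ge_def2) (simp add: lo_int_np)

lemma nge_int_zero: "b < 0 \<Longrightarrow> lo X = [] \<Longrightarrow> ro X = [] \<Longrightarrow> \<not> game_ge (int_game b) X"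
proof -
  assume a: "b < 0" "lo X = []" "ro X = []"
  then have X: "X = Game [] []" by (cases X) auto
  have "game_ge X (int_game (b + 1))" using X zero_ge_negint a(1) by simp
  then show ?thesis using ro_int_neg[OF a(1)] by (subst ge_def2) auto
qed

lemma game_cong_pos:
  assumes "GL \<noteq> []" "\<forall>g\<in>set GL. game_eq g (pos_int_game j)"
  shows "game_eq (Game GL []) (pos_int_game (Suc j))"
  unfolding game_eq_def
proof
  show "game_ge (Game GL []) (pos_int_game (Suc j))"
  proof (subst ge_def2, simp, intro notI)
    assume "game_ge (pos_int_game j) (Game GL [])"
    moreover obtain g where "g \<in> set GL" using assms(1) by (cases GL) auto
    ultimately show False using assms(2) by (subst (asm) ge_def2) (auto simp: game_eq_def)
  qed
next
  show "game_ge (pos_int_game (Suc j)) (Game GL [])"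
  proof (subst ge_def2, simp, intro ballI notI)
    fix g assume g: "g \<in> set GL" "game_ge g (Game [pos_int_game j] [])"
    then have "game_ge (pos_int_game j) (Game [pos_int_game j] [])"
      using assms(2) ge_trans game_eq_def by blast
    then show False using ge_refl by (subst (asm) ge_def2) auto
  qed
qed

lemma leftonly:
  assumes "finite V" "RA V E B R = {}"
  shows "game_eq (snort_pos n V E B R) (pos_int_game (min n (card (LA V E B R))))"
  using assms(2)
proof (induction n arbitrary: B)
  case 0 then show ?case by (simp add: eq_refl)
next
  case (Suc n)
  show ?case
  proof (cases "LA V E B R = {}")
    case True
    then show ?thesis using Suc.prems by (subst snort_Suc) (simp add: eq_refl)
  next
    case False
    define k where "k = card (LA V E B R)"
    have fin: "finite (LA V E B R)" using assms(1) by (simp add: LA_def)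
    have k: "k \<ge> 1" using False fin k_def by (simp add: Suc_leI card_gt_0_iff)
    have opt: "game_eq (snort_pos n V E (insert v B) R) (pos_int_game (min n (k - 1)))"
      if v: "v \<in> LA V E B R" for v
    proof -
      have "RA V E (insert v B) R = {}" using Suc.prems by (auto simp: RA_def)
      moreover have "LA V E (insert v B) R = LA V E B R - {v}" by (auto simp: LA_def)
      ultimately show ?thesis using Suc.IH[of "insert v B"] fin v k_def by simp
    qed
    have ro: "ro (snort_pos (Suc n) V E B R) = []" using Suc.prems by (subst snort_Suc) simp
    have lne: "lo (snort_pos (Suc n) V E B R) \<noteq> []"
    proof
      assume "lo (snort_pos (Suc n) V E B R) = []"
      then have "set (lo (snort_pos (Suc n) V E B R)) = {}" by simp
      then show False using lo_snort[OF assms(1), of n E B R] False by simp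
    qed
    have X: "snort_pos (Suc n) V E B R = Game (lo (snort_pos (Suc n) V E B R)) []"
      using ro by (cases "snort_pos (Suc n) V E B R") simp
    have c: "game_eq (snort_pos (Suc n) V E B R) (pos_int_game (Suc (min n (k - 1))))"
      by (subst X, rule game_cong_pos[OF lne]) (use opt lo_snort[OF assms(1)] in auto)
    have e: "min (Suc n) k = Suc (min n (k - 1))" using k by simp
    show ?thesis using c unfolding k_def[symmetric] e .
  qed
qed

lemma pos_NF: "pos_int_game j \<in> NF"
  using int_NF[of "int j"] by (simp add: int_game_def)

lemma gd_snort: "finite V \<Longrightarrow> gd (snort_pos n V E B R)"
proof (induction n arbitrary: B R)
  case 0 then show ?case using zero_is_number by simp
next
  case (Suc n)
  have num1: "is_number (snort_pos (Suc n) V E B R)" if "RA V E B R = {}" for B R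
    using leftonly[OF Suc.prems that] number_value_NF(1)[OF pos_NF] by blast
  have num2: "is_number (snort_pos (Suc n) V E B R)" if "LA V E B R = {}"
  proof -
    have "RA V E R B = {}" using that by (auto simp: LA_def RA_def)
    then have "is_number (neg (snort_pos (Suc n) V E B R))" using num1 neg_snort by metis
    then obtain N where N: "N \<in> NF" "game_eq (neg (snort_pos (Suc n) V E B R)) N" using is_number_NF by blast
    obtain k m where "N = num_game k m" using N(1) NF_def by blast
    have "game_eq (snort_pos (Suc n) V E B R) (neg N)" using eq_neg N(2) by blast
    moreover have "neg N \<in> NF" using \<open>N = num_game k m\<close> neg_num num_NF by simp
    ultimately show ?thesis using number_value_NF(1) by blast
  qed
  have finL: "finite (LA V E B R)" "finite (RA V E B R)" using Suc.prems by (auto simp: LA_def RA_def)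
  show ?case
    using num1[of B R] num2 Suc.IH Suc.prems finL unfolding snort_Suc
    by (subst gd.simps) (auto simp del: snort_pos.simps)
qed

definition Psi :: "nat \<Rightarrow> nat \<Rightarrow> nat \<Rightarrow> nat \<Rightarrow> int" where
  "Psi m ol f q = int ol + int m * int (f div 2) + (if even f \<and> even q then 0 else -1)"

lemma P_kill2: "odd m \<Longrightarrow> f \<ge> 2 \<Longrightarrow> Psi m (ol + m) (f - 2) (q + (m - 1)) = Psi m ol f q"
proof -
  assume a: "odd m" "f \<ge> 2"
  then obtain f' where f: "f = f' + 2" by (metis add.commute le_add_diff_inverse)
  have "(f' + 2) div 2 = f' div 2 + 1" by simp
  moreover have "even (q + (m - 1)) = even q" using a(1) by (elim oddE) simp
  ultimately show ?thesis unfolding Psi_def f by (simp add: algebra_simps)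
qed

lemma P_kill1: "odd m \<Longrightarrow> m \<ge> 3 \<Longrightarrow> Psi m ol 0 (q + (m - 1) - 1) \<ge> Psi m ol 1 q"
  unfolding Psi_def by auto

lemma P_pool2: "q \<ge> 2 \<Longrightarrow> Psi m ol f (q - 2) = Psi m ol f q"
proof -
  assume "q \<ge> 2"
  then have "even (q - 2) = even q" by (metis dvd_add_right_iff dvd_refl le_add_diff_inverse2 even_add)
  then show ?thesis unfolding Psi_def by simp
qed

lemma P_pool_own: "f \<ge> 1 \<Longrightarrow> Psi m (ol + m) (f - 1) q' \<ge> Psi m ol f 1"
proof -
  assume "f \<ge> 1"
  then have "f div 2 \<le> (f - 1) div 2 + 1" by linarith
  then have "int m * int (f div 2) \<le> int m * (int ((f - 1) div 2) + 1)"
    by (intro mult_left_mono) auto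
  then show ?thesis unfolding Psi_def by (auto simp: algebra_simps)
qed

lemma P_pool_O: "ol \<ge> 1 \<Longrightarrow> Psi m (ol - 1) 0 0 \<ge> Psi m ol 0 1"
  unfolding Psi_def by auto

lemma P_term: "Psi m 0 0 1 = -1"
  unfolding Psi_def by auto

lemma C_own: "f \<ge> 1 \<Longrightarrow> Psi m (ol + m) (f - 1) q \<ge> Psi m ol f q - 1"
proof -
  assume "f \<ge> 1"
  then have "f div 2 \<le> (f - 1) div 2 + 1" by linarith
  then have "int m * int (f div 2) \<le> int m * (int ((f - 1) div 2) + 1)"
    by (intro mult_left_mono) auto
  then show ?thesis unfolding Psi_def by (auto simp: algebra_simps)
qed

lemma C_O: "ol \<ge> 1 \<Longrightarrow> Psi m (ol - 1) f q \<ge> Psi m ol f q - 1"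
  unfolding Psi_def by auto

lemma C_pool: "q \<ge> 1 \<Longrightarrow> Psi m ol 0 (q - 1) \<ge> Psi m ol 0 q - 1"
  unfolding Psi_def by auto

lemma P_zero: "Psi m 0 0 0 = 0"
  unfolding Psi_def by auto

locale sg =
  fixes V :: "nat set" and E :: "nat \<Rightarrow> nat \<Rightarrow> bool" and c :: nat and U W :: "nat set"
    and p :: "nat \<Rightarrow> nat" and m :: nat
  assumes finU: "finite U" and finW: "finite W" and cU: "c \<notin> U" and cW: "c \<notin> W" and UW: "U \<inter> W = {}"
    and Vd: "V = insert c (U \<union> W)" and pW: "\<And>w. w \<in> W \<Longrightarrow> p w \<in> U"
    and lvc: "\<And>i. i \<in> U \<Longrightarrow> card {w\<in>W. p w = i} = m"
    and Ed: "E = (\<lambda>x y. (x = c \<and> y \<in> U) \<or> (y = c \<and> x \<in> U) \<or> (y \<in> W \<and> x = p y) \<or> (x \<in> W \<and> y = p x))"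
    and modd: "odd m" and m3: "m \<ge> 3"
begin

definition lvs :: "nat \<Rightarrow> nat set" where "lvs i = {w\<in>W. p w = i}"
definition FR :: "nat set \<Rightarrow> nat set \<Rightarrow> nat set" where
  "FR B R = {i\<in>U. i \<notin> B \<and> (\<forall>w\<in>lvs i. w \<notin> B \<and> w \<notin> R)}"
definition OL :: "nat set \<Rightarrow> nat set \<Rightarrow> nat set" where
  "OL B R = {w\<in>W. p w \<in> B \<and> w \<notin> B \<and> w \<notin> R}"
definition PL :: "nat set \<Rightarrow> nat set \<Rightarrow> nat set" where
  "PL B R = {w\<in>W. p w \<notin> B \<and> (\<exists>w'\<in>lvs (p w). w' \<in> R) \<and> w \<notin> B \<and> w \<notin> R}"
definition Inv :: "nat set \<Rightarrow> nat set \<Rightarrow> bool" where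
  "Inv B R \<longleftrightarrow> c \<in> B \<and> B \<subseteq> V \<and> R \<subseteq> V \<and> B \<inter> R = {} \<and> U \<inter> R = {} \<and>
     (\<forall>w\<in>W. p w \<in> B \<longrightarrow> w \<notin> R) \<and> (\<forall>i\<in>U. i \<notin> B \<longrightarrow> (\<forall>w\<in>lvs i. w \<notin> R) \<longrightarrow> (\<forall>w\<in>lvs i. w \<notin> B))"
definition psi :: "nat set \<Rightarrow> nat set \<Rightarrow> int" where
  "psi B R = Psi m (card (OL B R)) (card (FR B R)) (card (PL B R))"

lemma finV: "finite V" using Vd finU finW by simp
lemma fin_sets: "finite (lvs i)" "finite (FR B R)" "finite (OL B R)" "finite (PL B R)"
  using finU finW by (auto simp: lvs_def FR_def OL_def PL_def)
lemma lvs_card: "i \<in> U \<Longrightarrow> card (lvs i) = m" using lvc lvs_def by simp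

lemma E_W: "y \<in> W \<Longrightarrow> E x y \<longleftrightarrow> x = p y"
  using Ed cW UW pW by auto
lemma E_U: "y \<in> U \<Longrightarrow> E x y \<longleftrightarrow> x = c \<or> (x \<in> W \<and> y = p x)"
  using Ed cU UW by auto

lemma RA_char: "Inv B R \<Longrightarrow> RA V E B R = {w\<in>W. p w \<notin> B \<and> w \<notin> B \<and> w \<notin> R}"
  unfolding RA_def Inv_def using E_W E_U Vd cU cW UW by auto

lemma right_class:
  assumes "Inv B R" "v \<in> RA V E B R"
  shows "(v \<in> W \<and> p v \<in> FR B R) \<or> v \<in> PL B R"
proof -
  have v: "v \<in> W" "p v \<notin> B" "v \<notin> B" "v \<notin> R" using RA_char[OF assms(1)] assms(2) by auto
  show ?thesis
  proof (cases "\<exists>w'\<in>lvs (p v). w' \<in> R")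
    case True then show ?thesis using v by (auto simp: PL_def)
  next
    case False
    then have "\<forall>w\<in>lvs (p v). w \<notin> B" using assms(1) v pW unfolding Inv_def by blast
    then show ?thesis using False v pW by (auto simp: FR_def)
  qed
qed

lemma FR_LA: "Inv B R \<Longrightarrow> j \<in> FR B R \<Longrightarrow> j \<in> LA V E B R"
  unfolding LA_def FR_def Inv_def lvs_def using E_U Vd by auto
lemma OL_LA: "Inv B R \<Longrightarrow> w \<in> OL B R \<Longrightarrow> w \<in> LA V E B R"
  unfolding LA_def OL_def Inv_def using E_W Vd by auto
lemma pR: "Inv B R \<Longrightarrow> w \<in> W \<Longrightarrow> p w \<notin> R"
  using pW unfolding Inv_def by blast
lemma PL_LA: "Inv B R \<Longrightarrow> w \<in> PL B R \<Longrightarrow> w \<in> LA V E B R"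
proof -
  assume a: "Inv B R" "w \<in> PL B R"
  then have "p w \<notin> R" using pR by (auto simp: PL_def)
  then show ?thesis using a unfolding LA_def PL_def Inv_def using E_W Vd by auto
qed

lemma terminal:
  assumes "Inv B R" "FR B R = {}" "OL B R = {}" "PL B R = {}"
  shows "LA V E B R = {} \<and> RA V E B R = {}"
proof
  show "RA V E B R = {}"
  proof (rule ccontr)
    assume "RA V E B R \<noteq> {}"
    then obtain v where "v \<in> RA V E B R" by auto
    then show False using right_class[OF assms(1)] assms by blast
  qed
  show "LA V E B R = {}"
  proof (rule ccontr)
    assume "LA V E B R \<noteq> {}"
    then obtain z where z: "z \<in> V" "z \<notin> B" "z \<notin> R" "\<forall>u\<in>R. \<not> E u z" by (auto simp: LA_def)
    have "z \<noteq> c" using z assms(1) Inv_def by auto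
    then consider "z \<in> U" | "z \<in> W" using z Vd by auto
    then show False
    proof cases
      case 1
      then have "z \<notin> FR B R" using assms(2) by auto
      then obtain w where w: "w \<in> lvs z" "w \<in> B \<or> w \<in> R" using 1 z by (auto simp: FR_def)
      have "\<forall>w\<in>lvs z. w \<notin> R"
      proof
        fix w' assume "w' \<in> lvs z"
        then have "w' \<in> W" "p w' = z" by (auto simp: lvs_def)
        then have "E w' z" using E_U[OF 1] by auto
        then show "w' \<notin> R" using z(4) by auto
      qed
      then have "\<forall>w\<in>lvs z. w \<notin> B" using assms(1) 1 z unfolding Inv_def by blast
      then show False using w \<open>\<forall>w\<in>lvs z. w \<notin> R\<close> by auto
    next
      case 2
      have pz: "p z \<in> U" using pW 2 by auto
      show False
      proof (cases "p z \<in> B")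
        case True then show False using assms(3) z 2 by (auto simp: OL_def)
      next
        case False
        show False
        proof (cases "\<exists>w'\<in>lvs (p z). w' \<in> R")
          case True then show False using assms(4) z 2 False by (auto simp: PL_def)
        next
          case nr: False
          then have "\<forall>w\<in>lvs (p z). w \<notin> B" using assms(1) pz False unfolding Inv_def by blast
          then have "p z \<in> FR B R" using nr pz False by (auto simp: FR_def)
          then show False using assms(2) by auto
        qed
      qed
    qed
  qed
qed

lemma InvI: "c \<in> B \<Longrightarrow> B \<subseteq> V \<Longrightarrow> R \<subseteq> V \<Longrightarrow> B \<inter> R = {} \<Longrightarrow> U \<inter> R = {} \<Longrightarrow>
  (\<And>w. w \<in> W \<Longrightarrow> p w \<in> B \<Longrightarrow> w \<notin> R) \<Longrightarrow>
  (\<And>i w. i \<in> U \<Longrightarrow> i \<notin> B \<Longrightarrow> \<forall>w\<in>lvs i. w \<notin> R \<Longrightarrow> w \<in> lvs i \<Longrightarrow> w \<notin> B) \<Longrightarrow> Inv B R"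
  unfolding Inv_def by blast

lemma InvD: assumes "Inv B R" shows "c \<in> B" "B \<subseteq> V" "R \<subseteq> V" "B \<inter> R = {}" "U \<inter> R = {}"
  "\<And>w. w \<in> W \<Longrightarrow> p w \<in> B \<Longrightarrow> w \<notin> R"
  "\<And>i w. i \<in> U \<Longrightarrow> i \<notin> B \<Longrightarrow> \<forall>w\<in>lvs i. w \<notin> R \<Longrightarrow> w \<in> lvs i \<Longrightarrow> w \<notin> B"
  using assms unfolding Inv_def by blast+

lemma WV: "W \<subseteq> V" "U \<subseteq> V" using Vd by auto

lemma kill:
  assumes I: "Inv B R" and v: "v \<in> W" "p v \<in> FR B R"
  shows "Inv B (insert v R)" "FR B (insert v R) = FR B R - {p v}" "OL B (insert v R) = OL B R"
    "card (PL B (insert v R)) = card (PL B R) + (m - 1)"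
proof -
  have vl: "v \<in> lvs (p v)" using v by (auto simp: lvs_def)
  have pv: "p v \<in> U" "p v \<notin> B" "\<forall>w\<in>lvs (p v). w \<notin> B \<and> w \<notin> R" using v(2) by (auto simp: FR_def)
  show "Inv B (insert v R)"
  proof (rule InvI)
    show "insert v R \<subseteq> V" using InvD(3)[OF I] v WV by auto
    show "B \<inter> insert v R = {}" using InvD(4)[OF I] pv(3) vl by auto
    show "U \<inter> insert v R = {}" using InvD(5)[OF I] v UW by auto
    show "\<And>w. w \<in> W \<Longrightarrow> p w \<in> B \<Longrightarrow> w \<notin> insert v R" using InvD(6)[OF I] pv(2) by auto
    show "\<And>i w. i \<in> U \<Longrightarrow> i \<notin> B \<Longrightarrow> \<forall>w\<in>lvs i. w \<notin> insert v R \<Longrightarrow> w \<in> lvs i \<Longrightarrow> w \<notin> B"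
      using InvD(7)[OF I] by blast
  qed (use InvD[OF I] in auto)
  show "FR B (insert v R) = FR B R - {p v}" using vl pv unfolding FR_def lvs_def by auto
  show "OL B (insert v R) = OL B R" using pv unfolding OL_def by auto
  have e: "PL B (insert v R) = PL B R \<union> (lvs (p v) - {v})"
    using pv vl v unfolding PL_def lvs_def by auto
  have d: "PL B R \<inter> (lvs (p v) - {v}) = {}" using pv unfolding PL_def lvs_def by auto
  have "card (lvs (p v) - {v}) = m - 1" using vl lvs_card[OF pv(1)] fin_sets by simp
  then show "card (PL B (insert v R)) = card (PL B R) + (m - 1)"
    unfolding e using d fin_sets by (simp add: card_Un_disjoint)
qed

lemma poolR:
  assumes I: "Inv B R" and v: "v \<in> PL B R"
  shows "Inv B (insert v R)" "FR B (insert v R) = FR B R" "OL B (insert v R) = OL B R"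
    "PL B (insert v R) = PL B R - {v}"
proof -
  have v1: "v \<in> W" "p v \<notin> B" "v \<notin> B" "v \<notin> R" "\<exists>w'\<in>lvs (p v). w' \<in> R" using v by (auto simp: PL_def)
  show "Inv B (insert v R)"
  proof (rule InvI)
    show "insert v R \<subseteq> V" using InvD(3)[OF I] v1 WV by auto
    show "B \<inter> insert v R = {}" using InvD(4)[OF I] v1 by auto
    show "U \<inter> insert v R = {}" using InvD(5)[OF I] v1 UW by auto
    show "\<And>w. w \<in> W \<Longrightarrow> p w \<in> B \<Longrightarrow> w \<notin> insert v R" using InvD(6)[OF I] v1 by auto
    show "\<And>i w. i \<in> U \<Longrightarrow> i \<notin> B \<Longrightarrow> \<forall>w\<in>lvs i. w \<notin> insert v R \<Longrightarrow> w \<in> lvs i \<Longrightarrow> w \<notin> B"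
      using InvD(7)[OF I] by blast
  qed (use InvD[OF I] in auto)
  show "FR B (insert v R) = FR B R" using v1 unfolding FR_def lvs_def by auto
  show "OL B (insert v R) = OL B R" using v1 unfolding OL_def by auto
  show "PL B (insert v R) = PL B R - {v}" using v1 unfolding PL_def lvs_def by auto
qed

lemma own:
  assumes I: "Inv B R" and j: "j \<in> FR B R"
  shows "Inv (insert j B) R" "FR (insert j B) R = FR B R - {j}"
    "card (OL (insert j B) R) = card (OL B R) + m" "PL (insert j B) R = PL B R"
proof -
  have j1: "j \<in> U" "j \<notin> B" "\<forall>w\<in>lvs j. w \<notin> B \<and> w \<notin> R" using j by (auto simp: FR_def)
  have jR: "j \<notin> R" using I j1 unfolding Inv_def by auto
  show "Inv (insert j B) R"
  proof (rule InvI)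
    show "insert j B \<subseteq> V" using InvD(2)[OF I] j1 WV by auto
    show "insert j B \<inter> R = {}" using InvD(4)[OF I] jR by auto
    show "w \<notin> R" if "w \<in> W" "p w \<in> insert j B" for w
    proof (cases "p w = j")
      case True then have "w \<in> lvs j" using that by (simp add: lvs_def)
      then show ?thesis using j1(3) by blast
    next
      case False then show ?thesis using InvD(6)[OF I] that by blast
    qed
    show "w' \<notin> insert j B" if a: "i \<in> U" "i \<notin> insert j B" "\<forall>w\<in>lvs i. w \<notin> R" "w' \<in> lvs i" for i w'
    proof -
      have "w' \<in> W" using a(4) by (simp add: lvs_def)
      then have "w' \<noteq> j" using j1(1) UW by auto
      moreover have "w' \<notin> B" using InvD(7)[OF I] a by blast
      ultimately show ?thesis by simp
    qed
  qed (use InvD[OF I] in auto)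
  show "FR (insert j B) R = FR B R - {j}" using j1 UW unfolding FR_def lvs_def by auto
  have e: "OL (insert j B) R = OL B R \<union> lvs j" using j1 UW unfolding OL_def lvs_def by auto
  have d: "OL B R \<inter> lvs j = {}" using j1 unfolding OL_def lvs_def by auto
  show "card (OL (insert j B) R) = card (OL B R) + m"
    unfolding e using d fin_sets lvs_card[OF j1(1)] by (simp add: card_Un_disjoint)
  show "PL (insert j B) R = PL B R" using j1 UW unfolding PL_def lvs_def by auto
qed

lemma omove:
  assumes I: "Inv B R" and w: "w \<in> OL B R"
  shows "Inv (insert w B) R" "FR (insert w B) R = FR B R" "OL (insert w B) R = OL B R - {w}"
    "PL (insert w B) R = PL B R"
proof -
  have w1: "w \<in> W" "p w \<in> B" "w \<notin> B" "w \<notin> R" using w by (auto simp: OL_def)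
  have wU: "w \<notin> U" using w1 UW by auto
  show "Inv (insert w B) R"
  proof (rule InvI)
    show "insert w B \<subseteq> V" using InvD(2)[OF I] w1 WV by auto
    show "insert w B \<inter> R = {}" using InvD(4)[OF I] w1 by auto
    show "\<And>w'. w' \<in> W \<Longrightarrow> p w' \<in> insert w B \<Longrightarrow> w' \<notin> R"
      using InvD(6)[OF I] pW wU by fastforce
    show "w' \<notin> insert w B" if a: "i \<in> U" "i \<notin> insert w B" "\<forall>w\<in>lvs i. w \<notin> R" "w' \<in> lvs i" for i w'
    proof -
      have "w' \<notin> B" using InvD(7)[OF I] a by blast
      moreover have "w' \<noteq> w"
      proof
        assume "w' = w"
        then have "p w = i" using a(4) by (simp add: lvs_def)
        then show False using w1(2) a(2) by blast
      qed
      ultimately show ?thesis by simp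
    qed
  qed (use InvD[OF I] in auto)
  show "FR (insert w B) R = FR B R" using w1 wU unfolding FR_def lvs_def by auto
  show "OL (insert w B) R = OL B R - {w}" using w1 pW wU unfolding OL_def by auto
  show "PL (insert w B) R = PL B R" using w1 pW wU unfolding PL_def by auto
qed

lemma pmove:
  assumes I: "Inv B R" and w: "w \<in> PL B R"
  shows "Inv (insert w B) R" "FR (insert w B) R = FR B R" "OL (insert w B) R = OL B R"
    "PL (insert w B) R = PL B R - {w}"
proof -
  have w1: "w \<in> W" "p w \<notin> B" "w \<notin> B" "w \<notin> R" "\<exists>w'\<in>lvs (p w). w' \<in> R" using w by (auto simp: PL_def)
  have wU: "w \<notin> U" using w1 UW by auto
  show "Inv (insert w B) R"
  proof (rule InvI)
    show "insert w B \<subseteq> V" using InvD(2)[OF I] w1 WV by auto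
    show "insert w B \<inter> R = {}" using InvD(4)[OF I] w1 by auto
    show "\<And>w'. w' \<in> W \<Longrightarrow> p w' \<in> insert w B \<Longrightarrow> w' \<notin> R"
      using InvD(6)[OF I] pW wU by fastforce
    show "w' \<notin> insert w B" if a: "i \<in> U" "i \<notin> insert w B" "\<forall>w\<in>lvs i. w \<notin> R" "w' \<in> lvs i" for i w'
    proof -
      have "w' \<notin> B" using InvD(7)[OF I] a by blast
      moreover have "w' \<noteq> w"
      proof
        assume "w' = w"
        then have "p w = i" using a(4) by (simp add: lvs_def)
        then show False using w1(5) a(3) by blast
      qed
      ultimately show ?thesis by simp
    qed
  qed (use InvD[OF I] in auto)
  show "FR (insert w B) R = FR B R" using w1 wU unfolding FR_def lvs_def by auto
  show "OL (insert w B) R = OL B R" using w1 pW wU unfolding OL_def by auto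
  show "PL (insert w B) R = PL B R - {w}" using w1 pW wU unfolding PL_def by auto
qed


lemma mem_card1: "finite A \<Longrightarrow> x \<in> A \<Longrightarrow> 1 \<le> card A"
  using card_gt_0_iff[of A] by fastforce
lemma card1_ex: "1 \<le> card A \<Longrightarrow> \<exists>x. x \<in> A"
  by (cases "A = {}") auto

lemma opt_L:
  assumes "card (V - B - R) = n" "w \<in> LA V E B R"
  shows "n \<ge> 1" "snort_pos (n - 1) V E (insert w B) R \<in> set (lo (snort_pos n V E B R))"
    "card (V - insert w B - R) = n - 1"
proof -
  have w: "w \<in> V - B - R" using assms(2) by (simp add: LA_def)
  have fin: "finite (V - B - R)" using finV by simp
  show n1: "n \<ge> 1" using assms(1) mem_card1[OF fin w] by simp
  then obtain k where k: "n = Suc k" by (cases n) auto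
  show "snort_pos (n - 1) V E (insert w B) R \<in> set (lo (snort_pos n V E B R))"
    unfolding k using lo_snort[OF finV, of k E B R] assms(2) by simp
  have "V - insert w B - R = (V - B - R) - {w}" by auto
  then show "card (V - insert w B - R) = n - 1" using assms(1) w fin by simp
qed

lemma opt_R:
  assumes "card (V - B - R) = n" "y \<in> set (ro (snort_pos n V E B R))"
  shows "\<exists>v\<in>RA V E B R. y = snort_pos (n - 1) V E B (insert v R) \<and> card (V - B - insert v R) = n - 1"
proof (cases n)
  case 0 then show ?thesis using assms by simp
next
  case (Suc k)
  then obtain v where v: "v \<in> RA V E B R" "y = snort_pos k V E B (insert v R)"
    using assms(2) ro_snort[OF finV, of k E B R] by auto
  have w: "v \<in> V - B - R" using v(1) by (simp add: RA_def)
  have "V - B - insert v R = (V - B - R) - {v}" by auto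
  then have "card (V - B - insert v R) = n - 1" using assms(1) w finV by simp
  then show ?thesis using v Suc by auto
qed

lemma no_moves: "LA V E B R = {} \<Longrightarrow> RA V E B R = {} \<Longrightarrow> lo (snort_pos n V E B R) = [] \<and> ro (snort_pos n V E B R) = []"
  by (cases n) (simp_all only: snort_Suc snort_pos.simps(1), simp_all)

lemma main_aux:
  "\<forall>B R b. card (V - B - R) = n \<longrightarrow> Inv B R \<longrightarrow> b \<le> psi B R \<longrightarrow> game_ge (snort_pos n V E B R) (int_game b)"
proof (induction n rule: less_induct)
  case (less n)
  show ?case
  proof (intro allI impI)
    fix B R b assume n: "card (V - B - R) = n" and I: "Inv B R" and b: "b \<le> psi B R"
    have IH: "game_ge (snort_pos (card (V - B' - R')) V E B' R') (int_game b')"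
      if "card (V - B' - R') < n" "Inv B' R'" "b' \<le> psi B' R'" for B' R' b'
      using less.IH that by blast
    have respond: "\<not> game_ge (int_game b) (snort_pos (card (V - B - R')) V E B R')"
      if r: "card (V - B - R') < n" "w \<in> LA V E B R'" "Inv (insert w B) R'" "b \<le> psi (insert w B) R'" for R' w
    proof -
      note o = opt_L[OF refl r(2)]
      have "game_ge (snort_pos (card (V - insert w B - R')) V E (insert w B) R') (int_game b)"
        using IH[OF _ r(3) r(4)] o(3) r(1) by simp
      then show ?thesis using nge_intI[OF o(2)] o(3) by simp
    qed
    define f where "f = card (FR B R)"
    define ol where "ol = card (OL B R)"
    define q where "q = card (PL B R)"
    have psiB: "psi B R = Psi m ol f q" unfolding psi_def f_def ol_def q_def ..
    note fs = fin_sets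
    show "game_ge (snort_pos n V E B R) (int_game b)"
    proof (rule ge_intI)
      show "\<forall>xr\<in>set (ro (snort_pos n V E B R)). \<not> game_ge (int_game b) xr"
      proof
        fix xr assume xr: "xr \<in> set (ro (snort_pos n V E B R))"
        obtain v where v: "v \<in> RA V E B R" "xr = snort_pos (n - 1) V E B (insert v R)"
            "card (V - B - insert v R) = n - 1"
          using opt_R[OF n xr] by blast
        have "v \<in> V - B - R" using v(1) by (simp add: RA_def)
        then have n1: "n \<ge> 1" using n finV mem_card1[of "V - B - R" v] by simp
        have lt: "card (V - B - insert v R) < n" using v(3) n1 by simp
        have xr': "xr = snort_pos (card (V - B - insert v R)) V E B (insert v R)" using v by simp
        from right_class[OF I v(1)] show "\<not> game_ge (int_game b) xr"
        proof
          assume kv: "v \<in> W \<and> p v \<in> FR B R"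
          note K = kill[OF I conjunct1[OF kv] conjunct2[OF kv]]
          have f1: "f \<ge> 1" using mem_card1[OF fs(2) conjunct2[OF kv]] f_def by simp
          show ?thesis
          proof (cases "f \<ge> 2")
            case True
            have "card (FR B (insert v R)) = f - 1" using K(2) kv fs f_def by simp
            then have "1 \<le> card (FR B (insert v R))" using True by simp
            then obtain j where j: "j \<in> FR B (insert v R)" using card1_ex by blast
            note O = own[OF K(1) j]
            have "card (FR (insert j B) (insert v R)) = f - 2"
              using O(2) K(2) j kv fs f_def by (simp add: card_Diff_singleton)
            then have "psi (insert j B) (insert v R) = Psi m (ol + m) (f - 2) (q + (m - 1))"
              unfolding psi_def using O(3,4) K(3,4) ol_def q_def by simp
            also have "\<dots> = psi B R" using P_kill2[OF modd True] psiB by simp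
            finally show ?thesis unfolding xr' using respond[OF lt FR_LA[OF K(1) j] O(1)] b by simp
          next
            case False
            then have f0: "f = 1" using f1 by simp
            have "card (PL B (insert v R)) \<ge> 1" using K(4) m3 by simp
            then obtain w where w: "w \<in> PL B (insert v R)" using card1_ex by blast
            note P = pmove[OF K(1) w]
            have "card (FR (insert w B) (insert v R)) = 0" using P(2) K(2) kv fs f_def f0
              by (simp add: card_Diff_singleton)
            moreover have "card (PL (insert w B) (insert v R)) = q + (m - 1) - 1"
              using P(4) K(4) w fs q_def by (simp add: card_Diff_singleton)
            ultimately have "psi (insert w B) (insert v R) = Psi m ol 0 (q + (m - 1) - 1)"
              unfolding psi_def using P(3) K(3) ol_def by simp
            moreover have "Psi m ol 0 (q + (m - 1) - 1) \<ge> Psi m ol 1 q" by (rule P_kill1[OF modd m3])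
            ultimately have "b \<le> psi (insert w B) (insert v R)" using b psiB f0 by simp
            then show ?thesis unfolding xr' using respond[OF lt PL_LA[OF K(1) w] P(1)] by simp
          qed
        next
          assume pv: "v \<in> PL B R"
          note K = poolR[OF I pv]
          have q1: "q \<ge> 1" using mem_card1[OF fs(4) pv] q_def by simp
          have cq: "card (PL B (insert v R)) = q - 1" using K(4) pv fs q_def by (simp add: card_Diff_singleton)
          show ?thesis
          proof (cases "q \<ge> 2")
            case True
            then have "1 \<le> card (PL B (insert v R))" using cq by simp
            then obtain w where w: "w \<in> PL B (insert v R)" using card1_ex by blast
            note P = pmove[OF K(1) w]
            have "card (PL (insert w B) (insert v R)) = q - 2"
              using P(4) cq w fs by (simp add: card_Diff_singleton)
            then have "psi (insert w B) (insert v R) = Psi m ol f (q - 2)"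
              unfolding psi_def using P(2,3) K(2,3) ol_def f_def by simp
            also have "\<dots> = psi B R" using P_pool2[OF True] psiB by simp
            finally show ?thesis unfolding xr' using respond[OF lt PL_LA[OF K(1) w] P(1)] b by simp
          next
            case False
            then have q1': "q = 1" using q1 by simp
            show ?thesis
            proof (cases "f \<ge> 1")
              case True
              have "1 \<le> card (FR B (insert v R))" using K(2) f_def True by simp
              then obtain j where j: "j \<in> FR B (insert v R)" using card1_ex by blast
              note O = own[OF K(1) j]
              have "card (FR (insert j B) (insert v R)) = f - 1"
                using O(2) K(2) j fs f_def by (simp add: card_Diff_singleton)
              moreover have "card (PL (insert j B) (insert v R)) = 0" using O(4) cq q1' by simp
              ultimately have "psi (insert j B) (insert v R) = Psi m (ol + m) (f - 1) 0"
                unfolding psi_def using O(3) K(3) ol_def by simp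
              moreover have "Psi m (ol + m) (f - 1) 0 \<ge> Psi m ol f 1" by (rule P_pool_own[OF True])
              ultimately have "b \<le> psi (insert j B) (insert v R)" using b psiB q1' by simp
              then show ?thesis unfolding xr' using respond[OF lt FR_LA[OF K(1) j] O(1)] by simp
            next
              case nf: False
              then have f0: "f = 0" by simp
              show ?thesis
              proof (cases "ol \<ge> 1")
                case True
                have "1 \<le> card (OL B (insert v R))" using K(3) ol_def True by simp
                then obtain w where w: "w \<in> OL B (insert v R)" using card1_ex by blast
                note O = omove[OF K(1) w]
                have "card (OL (insert w B) (insert v R)) = ol - 1"
                  using O(3) K(3) w fs ol_def by (simp add: card_Diff_singleton)
                moreover have "card (FR (insert w B) (insert v R)) = 0" using O(2) K(2) f0 f_def by simp
                moreover have "card (PL (insert w B) (insert v R)) = 0" using O(4) cq q1' by simp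
                ultimately have "psi (insert w B) (insert v R) = Psi m (ol - 1) 0 0"
                  unfolding psi_def by simp
                moreover have "Psi m (ol - 1) 0 0 \<ge> Psi m ol 0 1" by (rule P_pool_O[OF True])
                ultimately have "b \<le> psi (insert w B) (insert v R)" using b psiB q1' f0 by simp
                then show ?thesis unfolding xr' using respond[OF lt OL_LA[OF K(1) w] O(1)] by simp
              next
                case False
                then have o0: "ol = 0" by simp
                have e: "FR B (insert v R) = {}" "OL B (insert v R) = {}" "PL B (insert v R) = {}"
                  using K(2,3) cq q1' f0 o0 fs f_def ol_def by auto
                note T = terminal[OF K(1) e]
                have "b < 0" using b psiB f0 o0 q1' P_term by simp
                then show ?thesis unfolding v(2) using nge_int_zero no_moves[OF conjunct1[OF T] conjunct2[OF T]] by blast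
              qed
            qed
          qed
        qed
      qed
    next
      assume bp: "b > 0"
      show "\<exists>xl\<in>set (lo (snort_pos n V E B R)). game_ge xl (int_game (b - 1))"
      proof -
        have step: "\<exists>xl\<in>set (lo (snort_pos n V E B R)). game_ge xl (int_game (b - 1))"
          if w: "w \<in> LA V E B R" "Inv (insert w B) R" "b - 1 \<le> psi (insert w B) R" for w
        proof -
          note o = opt_L[OF n w(1)]
          have "game_ge (snort_pos (card (V - insert w B - R)) V E (insert w B) R) (int_game (b - 1))"
            using IH[OF _ w(2) w(3)] o(3) o(1) by simp
          then show ?thesis using o(2,3) by auto
        qed
        show ?thesis
        proof (cases "f \<ge> 1")
          case True
          then obtain j where j: "j \<in> FR B R" using f_def card1_ex by blast
          note O = own[OF I j]
          have "card (FR (insert j B) R) = f - 1" using O(2) j fs f_def by (simp add: card_Diff_singleton)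
          then have "psi (insert j B) R = Psi m (ol + m) (f - 1) q"
            unfolding psi_def using O(3,4) ol_def q_def by simp
          then have "b - 1 \<le> psi (insert j B) R" using C_own[OF True, of m ol q] b psiB by simp
          then show ?thesis using step[OF FR_LA[OF I j] O(1)] by blast
        next
          case nf: False
          then have f0: "f = 0" by simp
          show ?thesis
          proof (cases "ol \<ge> 1")
            case True
            then obtain w where w: "w \<in> OL B R" using ol_def card1_ex by blast
            note O = omove[OF I w]
            have "card (OL (insert w B) R) = ol - 1" using O(3) w fs ol_def by (simp add: card_Diff_singleton)
            then have "psi (insert w B) R = Psi m (ol - 1) f q"
              unfolding psi_def using O(2,4) f_def q_def by simp
            then have "b - 1 \<le> psi (insert w B) R" using C_O[OF True, of m f q] b psiB by simp
            then show ?thesis using step[OF OL_LA[OF I w] O(1)] by blast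
          next
            case False
            then have o0: "ol = 0" by simp
            show ?thesis
            proof (cases "q \<ge> 1")
              case True
              then obtain w where w: "w \<in> PL B R" using q_def card1_ex by blast
              note P = pmove[OF I w]
              have "card (PL (insert w B) R) = q - 1" using P(4) w fs q_def by (simp add: card_Diff_singleton)
              then have "psi (insert w B) R = Psi m ol 0 (q - 1)"
                unfolding psi_def using P(2,3) f_def ol_def f0 by simp
              then have "b - 1 \<le> psi (insert w B) R" using C_pool[OF True, of m ol] b psiB f0 by simp
              then show ?thesis using step[OF PL_LA[OF I w] P(1)] by blast
            next
              case False
              then have "q = 0" by simp
              then have "psi B R = 0" using psiB f0 o0 P_zero by simp
              then show ?thesis using b bp by simp
            qed
          qed
        qed
      qed
    qed
  qed
qed

lemma main: "Inv B R \<Longrightarrow> b \<le> psi B R \<Longrightarrow> game_ge (snort_pos (card (V - B - R)) V E B R) (int_game b)"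
  using main_aux by blast

end

context sg
begin

lemma Inv_init: "Inv {c} {}"
  unfolding Inv_def using Vd cW pW cU by (auto simp: lvs_def)

lemma temp_bound:
  assumes a0: "0 \<le> psi {c} {}"
  shows "real_of_int (psi {c} {}) - 1 \<le> temperature (snort V E)"
proof -
  define a where "a = psi {c} {}"
  define n where "n = card V - 1"
  define P where "P = snort_pos n V E {c} {}"
  define Q where "Q = snort_pos n V E {} {c}"
  have cV: "c \<in> V" using Vd by simp
  have cardV: "card V = Suc n" using cV finV n_def by (metis card_gt_0_iff empty_iff Suc_pred')
  have "card (V - {c} - {}) = n" using cV finV n_def by simp
  then have PA: "game_ge P (int_game a)" using main[OF Inv_init, of a] P_def a_def by simp
  have QA: "game_ge (int_game (- a)) Q"
    using PA ge_neg[of "int_game a" P] neg_int[of a] neg_snort[of n V E "{c}" "{}"] Q_def P_def by simp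
  define Gm where "Gm = snort V E"
  have Gm: "Gm = snort_pos (Suc n) V E {} {}" using Gm_def snort_def cardV by simp
  have PL: "P \<in> set (lo Gm)"
  proof -
    have "c \<in> LA V E {} {}" using cV by (simp add: LA_def)
    then show ?thesis unfolding Gm P_def using lo_snort[OF finV, of n E "{}" "{}"] by auto
  qed
  have QR: "Q \<in> set (ro Gm)"
  proof -
    have "c \<in> RA V E {} {}" using cV by (simp add: RA_def)
    then show ?thesis unfolding Gm Q_def using ro_snort[OF finV, of n E "{}" "{}"] by auto
  qed
  have gP: "gd P" "gd Q" using gd_snort[OF finV] P_def Q_def by auto
  have nn: "\<not> is_number Gm"
  proof
    assume "is_number Gm"
    then obtain N where N: "N \<in> NF" "game_eq Gm N" using is_number_NF by blast
    have "\<not> game_ge P N" using N(2) PL unfolding game_eq_def by (subst (asm) (2) ge_def2) auto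
    then have "\<not> game_ge (int_game a) N" using PA ge_trans by blast
    then have n1: "real_of_int a < nv N" using cmp_NF[OF int_NF N(1)] nv_int by simp
    have "\<not> game_ge N Q" using N(2) QR unfolding game_eq_def by (subst (asm) ge_def2) auto
    then have "\<not> game_ge N (int_game (- a))" using QA ge_trans by blast
    then have "nv N < - real_of_int a" using cmp_NF[OF N(1) int_NF] nv_int by simp
    then show False using n1 a0 a_def by simp
  qed
  have temp: "temperature Gm = tsg Gm"
    using nn by (cases Gm) (simp add: tsg_def)
  have "real_of_int a - 1 \<le> Inf (Sg Gm)"
  proof (rule cInf_greatest[OF Sg_ne[OF nn]])
    fix t assume t: "t \<in> Sg Gm"
    then have t1: "t \<in> {-1..}" "SLg Gm t \<le> SRg Gm t" by (auto simp: Sg_def)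
    have "nv (int_game a) - 1 \<le> RW P t" by (rule w2.primal[OF gP(1) int_NF t1(1) PA])
    moreover have "LW Q t \<le> nv (int_game (- a)) + 1" by (rule w2.dual[OF gP(2) int_NF t1(1) QA])
    moreover have "RW P t - t \<le> SLg Gm t" by (rule SLg_ge[OF PL])
    moreover have "SRg Gm t \<le> LW Q t + t" by (rule SRg_le[OF QR])
    ultimately show "real_of_int a - 1 \<le> t" using t1(2) by (simp add: nv_int)
  qed
  then show ?thesis using temp tsg_Inf Gm_def a_def by simp
qed

lemma deg_bound: "max_degree V E \<le> max (card U) (m + 1)"
proof -
  have "card {u \<in> V. E v u} \<le> max (card U) (m + 1)" if v: "v \<in> V" for v
  proof -
    consider "v = c" | "v \<in> U" | "v \<in> W" using v Vd by auto
    then show ?thesis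
    proof cases
      case 1
      have "{u \<in> V. E v u} \<subseteq> U" using 1 Ed cU cW pW by auto
      then have "card {u \<in> V. E v u} \<le> card U" using finU by (simp add: card_mono)
      then show ?thesis by simp
    next
      case 2
      have "{u \<in> V. E v u} \<subseteq> insert c (lvs v)" using 2 Ed cU UW by (auto simp: lvs_def)
      then have "card {u \<in> V. E v u} \<le> card (insert c (lvs v))" using fin_sets by (simp add: card_mono)
      also have "\<dots> \<le> Suc (card (lvs v))" by (rule card_insert_le_m1) auto
      finally show ?thesis using lvs_card[OF 2] by simp
    next
      case 3
      have "{u \<in> V. E v u} \<subseteq> {p v}" using 3 Ed cW UW pW by auto
      then have "card {u \<in> V. E v u} \<le> 1" by (metis card.empty card.insert card_mono finite.emptyI finite.insertI empty_iff One_nat_def)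
      then show ?thesis by simp
    qed
  qed
  moreover have "V \<noteq> {}" using Vd by simp
  ultimately show ?thesis unfolding max_degree_def using finV by (simp add: Max_le_iff)
qed

lemma simple: "simple_graph V E"
proof -
  have ir: "p v \<noteq> v" if "v \<in> W" for v
  proof
    assume "p v = v"
    then have "v \<in> U" using pW[OF that] by simp
    then show False using that UW by auto
  qed
  have a: "\<forall>u v. E u v \<longrightarrow> u \<in> V \<and> v \<in> V" unfolding Ed Vd using pW by auto
  have b: "\<forall>u v. E u v \<longrightarrow> E v u" unfolding Ed by auto
  have d: "\<forall>v. \<not> E v v" unfolding Ed using cU ir by (auto dest: sym)
  show ?thesis unfolding simple_graph_def using finV a b d by blast
qed

end

definition Uk :: "nat \<Rightarrow> nat set" where "Uk d = {1..d}"
definition Wk :: "nat \<Rightarrow> nat set" where "Wk d = (\<lambda>(i, j). i + (d + 1) * j) ` ({1..d} \<times> {1..d})"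
definition pk :: "nat \<Rightarrow> nat \<Rightarrow> nat" where "pk d w = w mod (d + 1)"
definition Vk :: "nat \<Rightarrow> nat set" where "Vk d = insert 0 (Uk d \<union> Wk d)"
definition Ek :: "nat \<Rightarrow> nat \<Rightarrow> nat \<Rightarrow> bool" where
  "Ek d = (\<lambda>x y. (x = 0 \<and> y \<in> Uk d) \<or> (y = 0 \<and> x \<in> Uk d) \<or> (y \<in> Wk d \<and> x = pk d y) \<or> (x \<in> Wk d \<and> y = pk d x))"

lemma Wk_mem: "w \<in> Wk d \<longleftrightarrow> (\<exists>i j. w = i + (d + 1) * j \<and> 1 \<le> i \<and> i \<le> d \<and> 1 \<le> j \<and> j \<le> d)"
proof
  assume "w \<in> Wk d"
  then obtain i j where "(i, j) \<in> {1..d} \<times> {1..d}" "w = i + (d + 1) * j" unfolding Wk_def by auto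
  then show "\<exists>i j. w = i + (d + 1) * j \<and> 1 \<le> i \<and> i \<le> d \<and> 1 \<le> j \<and> j \<le> d" by auto
next
  assume "\<exists>i j. w = i + (d + 1) * j \<and> 1 \<le> i \<and> i \<le> d \<and> 1 \<le> j \<and> j \<le> d"
  then obtain i j where h: "w = i + (d + 1) * j" "1 \<le> i" "i \<le> d" "1 \<le> j" "j \<le> d" by blast
  then have "(i, j) \<in> {1..d} \<times> {1..d}" by auto
  then show "w \<in> Wk d" unfolding Wk_def using h(1) by (auto intro!: image_eqI[of _ _ "(i, j)"])
qed

lemma Wk_ge: "w \<in> Wk d \<Longrightarrow> d + 2 \<le> w"
proof -
  assume "w \<in> Wk d"
  then obtain i j where h: "w = i + (d + 1) * j" "1 \<le> i" "1 \<le> j" using Wk_mem by blast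
  have "(d + 1) * 1 \<le> (d + 1) * j" using h(3) by (rule mult_le_mono2)
  then show ?thesis using h by simp
qed

lemma pk_eq: "i \<le> d \<Longrightarrow> pk d (i + (d + 1) * j) = i"
proof -
  assume "i \<le> d"
  have "(i + (d + 1) * j) mod (d + 1) = i mod (d + 1)" by (rule mod_mult_self2)
  then show ?thesis unfolding pk_def using \<open>i \<le> d\<close> by simp
qed

lemma leaves_eq: "i \<in> Uk d \<Longrightarrow> {w \<in> Wk d. pk d w = i} = (\<lambda>j. i + (d + 1) * j) ` {1..d}"
proof
  assume i: "i \<in> Uk d"
  show "{w \<in> Wk d. pk d w = i} \<subseteq> (\<lambda>j. i + (d + 1) * j) ` {1..d}"
  proof
    fix w assume "w \<in> {w \<in> Wk d. pk d w = i}"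
    then obtain i' j where "w = i' + (d + 1) * j" "1 \<le> i'" "i' \<le> d" "1 \<le> j" "j \<le> d" "pk d w = i"
      using Wk_mem by auto
    then show "w \<in> (\<lambda>j. i + (d + 1) * j) ` {1..d}" using pk_eq by auto
  qed
  show "(\<lambda>j. i + (d + 1) * j) ` {1..d} \<subseteq> {w \<in> Wk d. pk d w = i}"
  proof
    fix w assume "w \<in> (\<lambda>j. i + (d + 1) * j) ` {1..d}"
    then obtain j where j: "1 \<le> j" "j \<le> d" "w = i + (d + 1) * j" by auto
    have i1: "1 \<le> i" "i \<le> d" using i by (auto simp: Uk_def)
    have "w \<in> Wk d" unfolding Wk_mem using j i1 by blast
    moreover have "pk d w = i" using pk_eq[OF i1(2), of j] j(3) by simp
    ultimately show "w \<in> {w \<in> Wk d. pk d w = i}" by simp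
  qed
qed

lemma inj_aff: "(c::nat) > 0 \<Longrightarrow> inj_on (\<lambda>j. i + c * j) A"
  by (auto simp: inj_on_def)

lemma sg_inst: "k \<ge> 1 \<Longrightarrow> sg (Vk (2*k+1)) (Ek (2*k+1)) 0 (Uk (2*k+1)) (Wk (2*k+1)) (pk (2*k+1)) (2*k+1)"
proof (unfold_locales)
  fix d assume "k \<ge> 1"
  define d where "d = 2 * k + 1"
  show "finite (Uk (2*k+1))" by (simp add: Uk_def)
  show "finite (Wk (2*k+1))" by (simp add: Wk_def)
  show "0 \<notin> Uk (2*k+1)" by (simp add: Uk_def)
  show "0 \<notin> Wk (2*k+1)" using Wk_ge[of 0] by auto
  show "Uk (2*k+1) \<inter> Wk (2*k+1) = {}" using Wk_ge by (fastforce simp: Uk_def)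
  show "Vk (2*k+1) = insert 0 (Uk (2*k+1) \<union> Wk (2*k+1))" by (simp add: Vk_def)
  show "pk (2*k+1) w \<in> Uk (2*k+1)" if wW: "w \<in> Wk (2*k+1)" for w
  proof -
    obtain i j where h: "w = i + (2*k+1 + 1) * j" "1 \<le> i" "i \<le> 2*k+1" using wW unfolding Wk_mem by blast
    have "pk (2*k+1) w = i" using pk_eq[OF h(3), of j] h(1) by simp
    then show ?thesis using h by (simp add: Uk_def)
  qed
  show "\<And>i. i \<in> Uk (2*k+1) \<Longrightarrow> card {w \<in> Wk (2*k+1). pk (2*k+1) w = i} = 2 * k + 1"
  proof -
    fix i assume "i \<in> Uk (2*k+1)"
    then have "card {w \<in> Wk (2*k+1). pk (2*k+1) w = i} = card ((\<lambda>j. i + (2*k+1 + 1) * j) ` {1..2*k+1})"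
      using leaves_eq by simp
    also have "\<dots> = card {1..2*k+1}" by (rule card_image, rule inj_aff) simp
    finally show "card {w \<in> Wk (2*k+1). pk (2*k+1) w = i} = 2 * k + 1" by simp
  qed
  show "Ek (2*k+1) = (\<lambda>x y. x = 0 \<and> y \<in> Uk (2*k+1) \<or> y = 0 \<and> x \<in> Uk (2*k+1) \<or>
      y \<in> Wk (2*k+1) \<and> x = pk (2*k+1) y \<or> x \<in> Wk (2*k+1) \<and> y = pk (2*k+1) x)"
    by (simp add: Ek_def)
  show "odd (2*k+1)" by simp
  show "3 \<le> 2*k+1" using \<open>k \<ge> 1\<close> by simp
qed

lemma instance_bound:
  assumes k: "k \<ge> 1"
  shows "simple_graph (Vk (2*k+1)) (Ek (2*k+1)) \<and>
    real_of_int (int (2*k+1) * int k - 1) - 1 - real (2*k+2) \<le>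
      temperature (snort (Vk (2*k+1)) (Ek (2*k+1))) - real (max_degree (Vk (2*k+1)) (Ek (2*k+1)))"
proof -
  interpret s: sg "Vk (2*k+1)" "Ek (2*k+1)" 0 "Uk (2*k+1)" "Wk (2*k+1)" "pk (2*k+1)" "2*k+1" by (rule sg_inst[OF k])
  have nz: "\<And>w. w \<in> Wk (2*k+1) \<Longrightarrow> w \<noteq> 0" using Wk_ge by fastforce
  have "s.FR {0} {} = Uk (2*k+1)" unfolding s.FR_def s.lvs_def using nz by (auto simp: Uk_def)
  moreover have "s.OL {0} {} = {}"
  proof -
    have "\<And>w. w \<in> Wk (2*k+1) \<Longrightarrow> pk (2*k+1) w \<noteq> 0" using s.pW s.cU by metis
    then show ?thesis unfolding s.OL_def by auto
  qed
  moreover have "s.PL {0} {} = {}" unfolding s.PL_def by auto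
  ultimately have p: "s.psi {0} {} = int (2*k+1) * int k - 1" unfolding s.psi_def Psi_def by (simp add: Uk_def)
  have t: "real_of_int (int (2*k+1) * int k - 1) - 1 \<le> temperature (snort (Vk (2*k+1)) (Ek (2*k+1)))"
    using s.temp_bound p k by simp
  have "max_degree (Vk (2*k+1)) (Ek (2*k+1)) \<le> max (card (Uk (2*k+1))) (2*k+1 + 1)" by (rule s.deg_bound)
  then have "max_degree (Vk (2*k+1)) (Ek (2*k+1)) \<le> 2*k+2" by (simp add: Uk_def)
  then have "real (max_degree (Vk (2*k+1)) (Ek (2*k+1))) \<le> real (2*k+2)" by linarith
  then show ?thesis using t s.simple by linarith
qed

theorem theorem10:
  shows "\<forall>M::real. \<exists>(V::nat set) E. simple_graph V E \<and>
           temperature (snort V E) - real (max_degree V E) > M"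
proof
  fix M :: real
  define k where "k = nat \<lceil>M\<rceil> + 3"
  have k1: "k \<ge> 1" using k_def by simp
  have kM: "M < real k" using k_def by linarith
  have k3: "real k \<ge> 3" using k_def by simp
  have "real k < real_of_int (int (2*k+1) * int k - 1) - 1 - real (2*k+2)"
  proof -
    have e: "real_of_int (int (2*k+1) * int k - 1) - 1 - real (2*k+2) = 2 * real k * real k - real k - 4"
      by (simp add: algebra_simps)
    have "2 * real k * real k \<ge> 6 * real k" using k3 by (simp add: mult_right_mono)
    then show ?thesis unfolding e using k3 by linarith
  qed
  then show "\<exists>(V::nat set) E. simple_graph V E \<and> temperature (snort V E) - real (max_degree V E) > M"
    using instance_bound[OF k1] kM by (intro exI[of _ "Vk (2*k+1)"] exI[of _ "Ek (2*k+1)"]) auto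
qed


end
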